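(* Let $n\ge1$, $p$ a prime, and $r$ a composition of $n$. The basis element $\overline{B}_r$ of the $p$-modular descent algebra $\Sigma(n,p)$ is nilpotent if and only if some positive integer occurs at least $p$ times as a component of $r$.
   Context: A composition of $n$ is a sequence of positive integers with sum $n$. The descent algebra $\Sigma_n$ has basis $\{B_q\}$ indexed by compositions of $n$ with multiplication $B_qB_r=\sum_{Z\in S(q,r)}B_{c(Z)}$, where for $q=[a_1,\dots,a_s]$, $r=[b_1,\dots,b_t]$, $S(q,r)$ is the set of $s\times t$ non-negative integer matrices with row sums $a_i$ and column sums $b_j$, and $c(Z)$ is the composition obtained by reading the entries of $Z$ row by row and omitting zeros. Let $\mathcal{Z}_n$ be the subring of integral combinations of the $B_q$ and $\Sigma(n,p)=\mathcal{Z}_n/p\mathcal{Z}_n$, an $\mathbb{F}_p$-algebra with basis $\overline{B}_q$ (images of the $B_q$); equivalently, $\overline{B}_q\overline{B}_r$ is given by the same formula with coefficients reduced mod $p$. *)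

theory Defs
  imports Main "HOL-Computational_Algebra.Primes"
begin

definition compositions :: "nat \<Rightarrow> nat list set" where
  "compositions n = {c. (\<forall>x\<in>set c. 0 < x) \<and> sum_list c = n}"

definition Smat :: "nat list \<Rightarrow> nat list \<Rightarrow> (nat \<Rightarrow> nat \<Rightarrow> nat) set" where
  "Smat q r = {Z. (\<forall>i j. (length q \<le> i \<or> length r \<le> j) \<longrightarrow> Z i j = 0)
      \<and> (\<forall>i<length q. (\<Sum>j<length r. Z i j) = q ! i)
      \<and> (\<forall>j<length r. (\<Sum>i<length q. Z i j) = r ! j)}"

definition cZ :: "nat \<Rightarrow> nat \<Rightarrow> (nat \<Rightarrow> nat \<Rightarrow> nat) \<Rightarrow> nat list" where
  "cZ s t Z = filter (\<lambda>x. x \<noteq> 0) (concat (map (\<lambda>i. map (\<lambda>j. Z i j) [0..<t]) [0..<s]))"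

text \<open>Coefficient of B_c in B_q B_r (over the integers).\<close>
definition Bprod :: "nat list \<Rightarrow> nat list \<Rightarrow> nat list \<Rightarrow> int" where
  "Bprod q r c = int (card {Z \<in> Smat q r. cZ (length q) (length r) Z = c})"

text \<open>Elements of Sigma(n,p) are coefficient functions on compositions of n, with
  coefficients in {0..p-1} representing F_p. Product reduced mod p.\<close>
definition dmult :: "nat \<Rightarrow> nat \<Rightarrow> (nat list \<Rightarrow> int) \<Rightarrow> (nat list \<Rightarrow> int) \<Rightarrow> (nat list \<Rightarrow> int)" where
  "dmult n p x y = (\<lambda>c. (\<Sum>q\<in>compositions n. \<Sum>r\<in>compositions n.
       x q * y r * Bprod q r c) mod int p)"

definition basisB :: "nat \<Rightarrow> nat list \<Rightarrow> (nat list \<Rightarrow> int)" where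
  "basisB p r = (\<lambda>c. if c = r then 1 mod int p else 0)"

text \<open>dpow n p x k = x^(k+1) in Sigma(n,p).\<close>
fun dpow :: "nat \<Rightarrow> nat \<Rightarrow> (nat list \<Rightarrow> int) \<Rightarrow> nat \<Rightarrow> (nat list \<Rightarrow> int)" where
  "dpow n p x 0 = (\<lambda>c. x c mod int p)"
| "dpow n p x (Suc k) = dmult n p x (dpow n p x k)"

definition nilpotent_desc :: "nat \<Rightarrow> nat \<Rightarrow> (nat list \<Rightarrow> int) \<Rightarrow> bool" where
  "nilpotent_desc n p x \<longleftrightarrow> (\<exists>k. dpow n p x k = (\<lambda>_. 0))"

end

theory Submission
  imports Defs "HOL-Library.FuncSet" "HOL-Combinatorics.Permutations"
begin


lemma finite_compositions: "finite (compositions n)"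
proof -
  have "compositions n \<subseteq> {xs. set xs \<subseteq> {..n} \<and> length xs \<le> n}"
  proof
    fix c assume c: "c \<in> compositions n"
    hence pos: "\<forall>x\<in>set c. 0 < x" and s: "sum_list c = n" by (auto simp: compositions_def)
    have "set c \<subseteq> {..n}" using s elem_le_sum_list
      by (metis atMost_iff in_set_conv_nth subsetI)
    moreover have "length c \<le> sum_list c" using pos
    proof (induction c)
      case (Cons a c) thus ?case by auto
    qed simp
    ultimately show "c \<in> {xs. set xs \<subseteq> {..n} \<and> length xs \<le> n}" using s by auto
  qed
  moreover have "finite {xs. set xs \<subseteq> {..n} \<and> length xs \<le> n}"
    by (rule finite_lists_length_le) simp
  ultimately show ?thesis by (rule finite_subset)
qed

lemma Smat_D:
  assumes "Z \<in> Smat q r"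
  shows "\<And>i j. length q \<le> i \<or> length r \<le> j \<Longrightarrow> Z i j = 0"
    and "\<And>i. i < length q \<Longrightarrow> (\<Sum>j<length r. Z i j) = q ! i"
    and "\<And>j. j < length r \<Longrightarrow> (\<Sum>i<length q. Z i j) = r ! j"
  using assms unfolding Smat_def by auto

lemma Smat_le:
  assumes "Z \<in> Smat q r"
  shows "Z i j \<le> sum_list q"
proof (cases "i < length q \<and> j < length r")
  case True
  have "Z i j \<le> (\<Sum>j<length r. Z i j)" using True by (intro member_le_sum) auto
  also have "\<dots> = q ! i" using Smat_D(2)[OF assms] True by auto
  also have "\<dots> \<le> sum_list q" using True by (simp add: elem_le_sum_list)
  finally show ?thesis .
next
  case False thus ?thesis using Smat_D(1)[OF assms, of i j] by auto
qed

lemma finite_Smat: "finite (Smat q r)"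
proof -
  let ?h = "\<lambda>Z::nat\<Rightarrow>nat\<Rightarrow>nat. restrict (case_prod Z) ({..<length q} \<times> {..<length r})"
  have "?h ` Smat q r \<subseteq> PiE ({..<length q} \<times> {..<length r}) (\<lambda>_. {..sum_list q})"
    using Smat_le by (auto simp: PiE_iff split: if_splits)
  hence f: "finite (?h ` Smat q r)" by (rule finite_subset) (simp add: finite_PiE)
  have "inj_on ?h (Smat q r)"
  proof (rule inj_onI)
    fix Z W assume Z: "Z \<in> Smat q r" and W: "W \<in> Smat q r" and e: "?h Z = ?h W"
    show "Z = W"
    proof (intro ext)
      fix i j
      show "Z i j = W i j"
      proof (cases "i < length q \<and> j < length r")
        case True
        from fun_cong[OF e, of "(i,j)"] True show ?thesis by auto
      next
        case False thus ?thesis using Smat_D(1)[OF Z, of i j] Smat_D(1)[OF W, of i j] by auto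
      qed
    qed
  qed
  thus ?thesis using f finite_imageD by blast
qed


definition pos2 :: "nat \<Rightarrow> nat \<Rightarrow> (nat \<Rightarrow> nat \<Rightarrow> nat) \<Rightarrow> (nat \<times> nat) list" where
  "pos2 s t Z = filter (\<lambda>(i,j). Z i j \<noteq> 0) (List.product [0..<s] [0..<t])"

lemma product_concat: "List.product xs ys = concat (map (\<lambda>x. map (Pair x) ys) xs)"
  by (induction xs) auto

lemma cZ_pos2: "cZ s t Z = map (case_prod Z) (pos2 s t Z)"
proof -
  have "concat (map (\<lambda>i. map (Z i) [0..<t]) [0..<s]) = map (case_prod Z) (List.product [0..<s] [0..<t])"
    by (simp add: product_concat map_concat comp_def)
  thus ?thesis unfolding cZ_def pos2_def by (simp add: filter_map comp_def split_def)
qed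

lemma cZ_rows: "cZ s t Z = concat (map (\<lambda>i. filter (\<lambda>x. x \<noteq> 0) (map (Z i) [0..<t])) [0..<s])"
  unfolding cZ_def by (simp add: filter_concat comp_def)

lemma distinct_pos2: "distinct (pos2 s t Z)"
  unfolding pos2_def by (simp add: distinct_product)

lemma set_pos2: "set (pos2 s t Z) = {(i,j). i < s \<and> j < t \<and> Z i j \<noteq> 0}"
  unfolding pos2_def by auto

lemma sum_list_filter_nz: "sum_list (filter (\<lambda>x. x \<noteq> (0::nat)) xs) = sum_list xs"
  by (induction xs) auto

lemma sum_list_filter_pos: "sum_list (filter ((<) (0::nat)) xs) = sum_list xs"
  by (induction xs) auto

lemma sum_list_concat: "sum_list (concat xss) = sum_list (map sum_list xss)"
  by (induction xss) auto

lemma sum_list_map_upt: "sum_list (map f [0..<n]) = (\<Sum>j<n. f j)"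
  by (simp add: sum_list_sum_nth atLeast0LessThan)

lemma sum_list_nth: "(\<Sum>i<length q. q ! i) = sum_list q"
  by (simp add: sum_list_sum_nth atLeast0LessThan)

lemma cZ_sum:
  assumes "Z \<in> Smat q r"
  shows "sum_list (cZ (length q) (length r) Z) = sum_list q"
proof -
  have "sum_list (cZ (length q) (length r) Z) = (\<Sum>i<length q. \<Sum>j<length r. Z i j)"
    unfolding cZ_rows by (simp add: sum_list_concat sum_list_filter_nz sum_list_filter_pos comp_def sum_list_map_upt)
  also have "\<dots> = (\<Sum>i<length q. q ! i)" using Smat_D(2)[OF assms] by simp
  finally show ?thesis by (simp add: sum_list_nth)
qed

lemma cZ_compositions:
  assumes "Z \<in> Smat q r" "q \<in> compositions n"
  shows "cZ (length q) (length r) Z \<in> compositions n"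
  using cZ_sum[OF assms(1)] assms(2) unfolding compositions_def cZ_def by auto

lemma length_cZ_card: "length (cZ s t Z) = card {(i,j). i < s \<and> j < t \<and> Z i j \<noteq> 0}"
  using distinct_card[OF distinct_pos2, of s t Z] by (simp add: cZ_pos2 set_pos2)

lemma length_cZ_ge_rows:
  assumes "Z \<in> Smat q r" "\<forall>x\<in>set q. 0 < x"
  shows "length q \<le> length (cZ (length q) (length r) Z)"
proof -
  have "\<forall>i<length q. \<exists>j<length r. Z i j \<noteq> 0"
  proof (intro allI impI)
    fix i assume i: "i < length q"
    have "(\<Sum>j<length r. Z i j) \<noteq> 0" using Smat_D(2)[OF assms(1) i] assms(2) i by auto
    thus "\<exists>j<length r. Z i j \<noteq> 0" by (meson lessThan_iff sum.neutral)
  qed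
  then obtain f where f: "\<And>i. i < length q \<Longrightarrow> f i < length r \<and> Z i (f i) \<noteq> 0" by metis
  have "card {..<length q} \<le> card {(i,j). i < length q \<and> j < length r \<and> Z i j \<noteq> 0}"
  proof (rule card_inj_on_le[where f = "\<lambda>i. (i, f i)"])
    show "inj_on (\<lambda>i. (i, f i)) {..<length q}" by (auto simp: inj_on_def)
    show "(\<lambda>i. (i, f i)) ` {..<length q} \<subseteq> {(i, j). i < length q \<and> j < length r \<and> Z i j \<noteq> 0}"
      using f by auto
    show "finite {(i, j). i < length q \<and> j < length r \<and> Z i j \<noteq> 0}"
      by (rule finite_subset[of _ "{..<length q} \<times> {..<length r}"]) auto
  qed
  thus ?thesis by (simp add: length_cZ_card)
qed

lemma length_cZ_ge_cols:
  assumes "Z \<in> Smat q r" "\<forall>x\<in>set r. 0 < x"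
  shows "length r \<le> length (cZ (length q) (length r) Z)"
proof -
  have "\<forall>j<length r. \<exists>i<length q. Z i j \<noteq> 0"
  proof (intro allI impI)
    fix j assume j: "j < length r"
    have "(\<Sum>i<length q. Z i j) \<noteq> 0" using Smat_D(3)[OF assms(1) j] assms(2) j by auto
    thus "\<exists>i<length q. Z i j \<noteq> 0" by (meson lessThan_iff sum.neutral)
  qed
  then obtain f where f: "\<And>j. j < length r \<Longrightarrow> f j < length q \<and> Z (f j) j \<noteq> 0" by metis
  have "card {..<length r} \<le> card {(i,j). i < length q \<and> j < length r \<and> Z i j \<noteq> 0}"
  proof (rule card_inj_on_le[where f = "\<lambda>j. (f j, j)"])
    show "inj_on (\<lambda>j. (f j, j)) {..<length r}" by (auto simp: inj_on_def)
    show "(\<lambda>j. (f j, j)) ` {..<length r} \<subseteq> {(i, j). i < length q \<and> j < length r \<and> Z i j \<noteq> 0}"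
      using f by auto
    show "finite {(i, j). i < length q \<and> j < length r \<and> Z i j \<noteq> 0}"
      by (rule finite_subset[of _ "{..<length q} \<times> {..<length r}"]) auto
  qed
  thus ?thesis by (simp add: length_cZ_card)
qed

lemma concat_len_ge: "\<forall>x\<in>set xs. 1 \<le> length x \<Longrightarrow> length xs \<le> length (concat xs)"
  by (induction xs) auto

lemma concat_len_one:
  assumes "\<forall>x\<in>set xs. 1 \<le> length x" "length (concat xs) = length xs"
  shows "\<forall>x\<in>set xs. length x = 1"
  using assms
proof (induction xs)
  case (Cons a xs)
  have g: "length xs \<le> length (concat xs)" using Cons.prems(1) by (intro concat_len_ge) simp
  have a1: "1 \<le> length a" using Cons.prems(1) by simp
  have e: "length a + length (concat xs) = Suc (length xs)" using Cons.prems(2) by simp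
  have "length a = 1" using g a1 e by linarith
  moreover have "length (concat xs) = length xs" using g a1 e by linarith
  ultimately show ?case using Cons.IH Cons.prems(1) by simp
qed simp

lemma length_one_conv: "length xs = 1 \<longleftrightarrow> (\<exists>x. xs = [x])"
  by (cases xs) auto

lemma length_one_sum: "length xs = 1 \<Longrightarrow> xs = [sum_list (xs::nat list)]"
  by (cases xs) auto

lemma cZ_eq_rows:
  assumes "Z \<in> Smat q r" "\<forall>x\<in>set q. 0 < x"
    and "length (cZ (length q) (length r) Z) = length q"
  shows "cZ (length q) (length r) Z = q"
    and "\<And>i. i < length q \<Longrightarrow> length (filter (\<lambda>x. x \<noteq> 0) (map (Z i) [0..<length r])) = 1"
proof -
  let ?R = "\<lambda>i. filter (\<lambda>x. x \<noteq> 0) (map (Z i) [0..<length r])"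
  have sumR: "sum_list (?R i) = q ! i" if "i < length q" for i
    using Smat_D(2)[OF assms(1) that] by (simp add: sum_list_filter_nz sum_list_filter_pos sum_list_map_upt)
  have ne: "1 \<le> length (?R i)" if "i < length q" for i
    using sumR[OF that] assms(2) nth_mem[OF that] by (cases "?R i") fastforce+
  have "\<forall>x\<in>set (map ?R [0..<length q]). length x = 1"
    apply (rule concat_len_one)
    using ne assms(3) by (auto simp: cZ_rows)
  hence one: "length (?R i) = 1" if "i < length q" for i using that by auto
  show "\<And>i. i < length q \<Longrightarrow> length (?R i) = 1" using one by blast
  have "?R i = [q ! i]" if "i < length q" for i
    using length_one_sum[OF one[OF that]] sumR[OF that] by simp
  hence mapeq: "map ?R [0..<length q] = map (\<lambda>i. [q ! i]) [0..<length q]" by simp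
  show "cZ (length q) (length r) Z = q" unfolding cZ_rows mapeq
    by (simp add: concat_map_singleton map_nth)
qed


definition idx :: "'a list \<Rightarrow> 'a \<Rightarrow> nat" where
  "idx xs x = (THE l. l < length xs \<and> xs ! l = x)"

lemma idx_props:
  assumes "distinct xs" "x \<in> set xs"
  shows "idx xs x < length xs" "xs ! idx xs x = x"
proof -
  obtain l where l: "l < length xs" "xs ! l = x" using assms(2) by (auto simp: in_set_conv_nth)
  have "idx xs x = l" unfolding idx_def
    by (rule the_equality) (use l assms(1) nth_eq_iff_index_eq in auto)
  thus "idx xs x < length xs" "xs ! idx xs x = x" using l by auto
qed

lemma idx_nth:
  assumes "distinct xs" "l < length xs"
  shows "idx xs (xs ! l) = l"
  unfolding idx_def
  by (rule the_equality) (use assms nth_eq_iff_index_eq in auto)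

lemma map_nth_upt: "map (\<lambda>l. g (xs ! l)) [0..<length xs] = map g xs"
  by (rule nth_equalityI) auto

lemma sum_nth_set:
  assumes "distinct xs"
  shows "(\<Sum>l<length xs. g (xs ! l)) = (\<Sum>x\<in>set xs. g x)"
proof -
  have "(\<Sum>l<length xs. g (xs ! l)) = sum_list (map (\<lambda>l. g (xs ! l)) [0..<length xs])"
    by (simp add: sum_list_map_upt)
  also have "\<dots> = sum_list (map g xs)" by (simp add: map_nth_upt)
  also have "\<dots> = (\<Sum>x\<in>set xs. g x)" using assms by (simp add: sum_list_distinct_conv_sum_set)
  finally show ?thesis .
qed

lemma sum_pos2:
  fixes h :: "nat \<times> nat \<Rightarrow> 'b::comm_monoid_add"
  assumes "\<And>i j. i < s \<Longrightarrow> j < t \<Longrightarrow> Z i j = 0 \<Longrightarrow> h (i,j) = 0"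
  shows "(\<Sum>x\<in>set (pos2 s t Z). h x) = (\<Sum>i<s. \<Sum>j<t. h (i,j))"
proof -
  have "(\<Sum>x\<in>set (pos2 s t Z). h x) = (\<Sum>x\<in>{..<s} \<times> {..<t}. h x)"
    by (rule sum.mono_neutral_left) (use assms in \<open>auto simp: set_pos2\<close>)
  also have "\<dots> = (\<Sum>i<s. \<Sum>j<t. h (i,j))" by (simp add: sum.cartesian_product)
  finally show ?thesis .
qed

lemma concat_map_filter_nil:
  assumes "\<And>x. \<not> Q x \<Longrightarrow> h x = []"
  shows "concat (map h (filter Q xs)) = concat (map h xs)"
  using assms by (induction xs) auto

lemma filter_map_filter_zero:
  assumes "\<And>x. \<not> Q x \<Longrightarrow> f x = (0::nat)"
  shows "filter ((<) 0) (map f (filter Q xs)) = filter ((<) 0) (map f xs)"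
  using assms by (induction xs) auto

definition Arr :: "nat list \<Rightarrow> nat list \<Rightarrow> nat list \<Rightarrow> (nat \<Rightarrow> nat \<Rightarrow> nat \<Rightarrow> nat) set" where
  "Arr q1 q2 q3 = {X. (\<forall>i j k. length q1 \<le> i \<or> length q2 \<le> j \<or> length q3 \<le> k \<longrightarrow> X i j k = 0)
     \<and> (\<forall>i<length q1. (\<Sum>j<length q2. \<Sum>k<length q3. X i j k) = q1 ! i)
     \<and> (\<forall>j<length q2. (\<Sum>i<length q1. \<Sum>k<length q3. X i j k) = q2 ! j)
     \<and> (\<forall>k<length q3. (\<Sum>i<length q1. \<Sum>j<length q2. X i j k) = q3 ! k)}"

definition rd3 :: "nat \<Rightarrow> nat \<Rightarrow> nat \<Rightarrow> (nat \<Rightarrow> nat \<Rightarrow> nat \<Rightarrow> nat) \<Rightarrow> nat list" where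
  "rd3 l1 l2 l3 X = concat (map (\<lambda>i. concat (map (\<lambda>j. filter ((<) 0) (map (X i j) [0..<l3])) [0..<l2])) [0..<l1])"

lemma concat_product: "concat (map (\<lambda>(i,j). f i j) (List.product xs ys)) = concat (map (\<lambda>i. concat (map (f i) ys)) xs)"
  by (induction xs) (auto simp: comp_def)

lemma rd3_A: "rd3 l1 l2 l3 X = concat (map (\<lambda>(i,j). filter ((<) 0) (map (X i j) [0..<l3])) (List.product [0..<l1] [0..<l2]))"
  unfolding rd3_def concat_product by simp

lemma rd3_B: "rd3 l1 l2 l3 X = concat (map (\<lambda>i. filter ((<) 0) (map (\<lambda>(j,k). X i j k) (List.product [0..<l2] [0..<l3]))) [0..<l1])"
  unfolding rd3_def product_concat by (simp add: map_concat comp_def filter_concat)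

lemma cZ_rows': "cZ s t Z = concat (map (\<lambda>i. filter ((<) 0) (map (Z i) [0..<t])) [0..<s])"
proof -
  have e: "(\<lambda>x::nat. x \<noteq> 0) = (<) 0" by auto
  show ?thesis unfolding cZ_rows e ..
qed


definition phiL :: "nat list \<Rightarrow> nat list \<Rightarrow> (nat \<Rightarrow> nat \<Rightarrow> nat) \<times> (nat \<Rightarrow> nat \<Rightarrow> nat) \<Rightarrow> (nat \<Rightarrow> nat \<Rightarrow> nat \<Rightarrow> nat)" where
  "phiL q1 q2 ZW = (\<lambda>i j k. if i < length q1 \<and> j < length q2 \<and> fst ZW i j \<noteq> 0
      then snd ZW (idx (pos2 (length q1) (length q2) (fst ZW)) (i,j)) k else 0)"

definition ZofL :: "nat list \<Rightarrow> (nat \<Rightarrow> nat \<Rightarrow> nat \<Rightarrow> nat) \<Rightarrow> nat \<Rightarrow> nat \<Rightarrow> nat" where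
  "ZofL q3 X = (\<lambda>i j. \<Sum>k<length q3. X i j k)"

definition psiL :: "nat list \<Rightarrow> nat list \<Rightarrow> nat list \<Rightarrow> (nat \<Rightarrow> nat \<Rightarrow> nat \<Rightarrow> nat) \<Rightarrow> (nat \<Rightarrow> nat \<Rightarrow> nat) \<times> (nat \<Rightarrow> nat \<Rightarrow> nat)" where
  "psiL q1 q2 q3 X = (ZofL q3 X, (\<lambda>l k. if l < length (pos2 (length q1) (length q2) (ZofL q3 X))
      then X (fst (pos2 (length q1) (length q2) (ZofL q3 X) ! l)) (snd (pos2 (length q1) (length q2) (ZofL q3 X) ! l)) k else 0))"

definition LS where
  "LS q1 q2 q3 c = {(Z,W). Z \<in> Smat q1 q2 \<and> W \<in> Smat (cZ (length q1) (length q2) Z) q3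
      \<and> cZ (length (cZ (length q1) (length q2) Z)) (length q3) W = c}"

lemma pos2_nth:
  assumes "l < length (pos2 s t Z)"
  shows "fst (pos2 s t Z ! l) < s" "snd (pos2 s t Z ! l) < t" "Z (fst (pos2 s t Z ! l)) (snd (pos2 s t Z ! l)) \<noteq> 0"
  using nth_mem[OF assms] by (auto simp: set_pos2)

lemma cZ_nth:
  assumes "l < length (pos2 s t Z)"
  shows "cZ s t Z ! l = Z (fst (pos2 s t Z ! l)) (snd (pos2 s t Z ! l))"
  using assms by (simp add: cZ_pos2 case_prod_beta)

lemma length_cZ_pos2: "length (cZ s t Z) = length (pos2 s t Z)"
  by (simp add: cZ_pos2)

lemma phiL_nth:
  assumes "l < length (pos2 (length q1) (length q2) Z)"
  shows "phiL q1 q2 (Z,W) (fst (pos2 (length q1) (length q2) Z ! l)) (snd (pos2 (length q1) (length q2) Z ! l)) k = W l k"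
proof -
  let ?P = "pos2 (length q1) (length q2) Z"
  have "(fst (?P ! l), snd (?P ! l)) = ?P ! l" by simp
  hence i: "idx ?P (fst (?P ! l), snd (?P ! l)) = l" using idx_nth[OF distinct_pos2 assms] by simp
  show ?thesis using pos2_nth[OF assms] i unfolding phiL_def by simp
qed

lemma phiL_sum:
  assumes Z: "Z \<in> Smat q1 q2" and W: "W \<in> Smat (cZ (length q1) (length q2) Z) q3"
    and ij: "i < length q1" "j < length q2"
  shows "(\<Sum>k<length q3. phiL q1 q2 (Z,W) i j k) = Z i j"
proof (cases "Z i j = 0")
  case True thus ?thesis by (simp add: phiL_def)
next
  case False
  let ?P = "pos2 (length q1) (length q2) Z"
  have mem: "(i,j) \<in> set ?P" using False ij by (simp add: set_pos2)
  define l where "l = idx ?P (i,j)"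
  have l: "l < length ?P" "?P ! l = (i,j)" using idx_props[OF distinct_pos2 mem] l_def by auto
  have "(\<Sum>k<length q3. phiL q1 q2 (Z,W) i j k) = (\<Sum>k<length q3. W l k)"
    using False ij by (simp add: phiL_def l_def)
  also have "\<dots> = cZ (length q1) (length q2) Z ! l"
    using Smat_D(2)[OF W, of l] l(1) by (simp add: length_cZ_pos2)
  also have "\<dots> = Z i j" using cZ_nth[OF l(1)] l(2) by simp
  finally show ?thesis .
qed

lemma phiL_zero:
  assumes W: "W \<in> Smat (cZ (length q1) (length q2) Z) q3"
    and "length q1 \<le> i \<or> length q2 \<le> j \<or> length q3 \<le> k"
  shows "phiL q1 q2 (Z,W) i j k = 0"
  using assms Smat_D(1)[OF W] by (auto simp: phiL_def)

lemma phiL_Arr: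
  assumes Z: "Z \<in> Smat q1 q2" and W: "W \<in> Smat (cZ (length q1) (length q2) Z) q3"
  shows "phiL q1 q2 (Z,W) \<in> Arr q1 q2 q3"
proof -
  let ?X = "phiL q1 q2 (Z,W)"
  let ?P = "pos2 (length q1) (length q2) Z"
  have r1: "(\<Sum>j<length q2. \<Sum>k<length q3. ?X i j k) = q1 ! i" if "i < length q1" for i
    using phiL_sum[OF Z W that] Smat_D(2)[OF Z that] by simp
  have r2: "(\<Sum>i<length q1. \<Sum>k<length q3. ?X i j k) = q2 ! j" if "j < length q2" for j
    using phiL_sum[OF Z W _ that] Smat_D(3)[OF Z that] by simp
  have r3: "(\<Sum>i<length q1. \<Sum>j<length q2. ?X i j k) = q3 ! k" if k: "k < length q3" for k
  proof -
    have "(\<Sum>i<length q1. \<Sum>j<length q2. ?X i j k) = (\<Sum>x\<in>set ?P. ?X (fst x) (snd x) k)"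
      using sum_pos2[of "length q1" "length q2" Z "\<lambda>x. ?X (fst x) (snd x) k"] by (simp add: phiL_def)
    also have "\<dots> = (\<Sum>l<length ?P. ?X (fst (?P ! l)) (snd (?P ! l)) k)"
      by (rule sum_nth_set[symmetric]) (rule distinct_pos2)
    also have "\<dots> = (\<Sum>l<length ?P. W l k)" by (simp add: phiL_nth)
    also have "\<dots> = q3 ! k" using Smat_D(3)[OF W k] by (simp add: length_cZ_pos2)
    finally show ?thesis .
  qed
  show ?thesis unfolding Arr_def using r1 r2 r3 phiL_zero[OF W] by blast
qed

lemma phiL_rd3:
  assumes Z: "Z \<in> Smat q1 q2" and W: "W \<in> Smat (cZ (length q1) (length q2) Z) q3"
  shows "rd3 (length q1) (length q2) (length q3) (phiL q1 q2 (Z,W))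
       = cZ (length (cZ (length q1) (length q2) Z)) (length q3) W"
proof -
  let ?X = "phiL q1 q2 (Z,W)"
  let ?P = "pos2 (length q1) (length q2) Z"
  let ?g = "\<lambda>(i,j). filter ((<) 0) (map (?X i j) [0..<length q3])"
  have "cZ (length (cZ (length q1) (length q2) Z)) (length q3) W
      = concat (map (\<lambda>l. filter ((<) 0) (map (W l) [0..<length q3])) [0..<length ?P])"
    by (simp only: length_cZ_pos2 cZ_rows'[of "length ?P" "length q3" W])
  also have "map (\<lambda>l. filter ((<) 0) (map (W l) [0..<length q3])) [0..<length ?P]
        = map (\<lambda>l. ?g (?P ! l)) [0..<length ?P]"
  proof (rule map_cong[OF refl])
    fix l assume "l \<in> set [0..<length ?P]"
    hence l: "l < length ?P" by simp
    have e: "?X (fst (?P ! l)) (snd (?P ! l)) = W l" by (rule ext) (rule phiL_nth[OF l])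
    show "filter ((<) 0) (map (W l) [0..<length q3]) = ?g (?P ! l)"
      by (simp add: case_prod_beta e)
  qed
  also have "\<dots> = map ?g ?P" by (rule map_nth_upt)
  also have "concat (map ?g ?P) = concat (map ?g (List.product [0..<length q1] [0..<length q2]))"
    unfolding pos2_def by (rule concat_map_filter_nil) (auto simp: phiL_def)
  also have "\<dots> = rd3 (length q1) (length q2) (length q3) ?X" by (simp add: rd3_A)
  finally show ?thesis by simp
qed


lemma Arr_D:
  assumes "X \<in> Arr q1 q2 q3"
  shows "\<And>i j k. length q1 \<le> i \<or> length q2 \<le> j \<or> length q3 \<le> k \<Longrightarrow> X i j k = 0"
    and "\<And>i. i < length q1 \<Longrightarrow> (\<Sum>j<length q2. \<Sum>k<length q3. X i j k) = q1 ! i"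
    and "\<And>j. j < length q2 \<Longrightarrow> (\<Sum>i<length q1. \<Sum>k<length q3. X i j k) = q2 ! j"
    and "\<And>k. k < length q3 \<Longrightarrow> (\<Sum>i<length q1. \<Sum>j<length q2. X i j k) = q3 ! k"
  using assms unfolding Arr_def by auto

lemma ZofL_zero:
  assumes X: "X \<in> Arr q1 q2 q3" and "ZofL q3 X i j = 0"
  shows "X i j k = 0"
proof (cases "k < length q3")
  case True
  have "(\<Sum>k<length q3. X i j k) = 0" using assms(2) by (simp add: ZofL_def)
  thus ?thesis using True by simp
next
  case False thus ?thesis using Arr_D(1)[OF X] by simp
qed

lemma psiL_Z:
  assumes X: "X \<in> Arr q1 q2 q3"
  shows "ZofL q3 X \<in> Smat q1 q2"
  unfolding Smat_def ZofL_def using Arr_D[OF X] by auto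

lemma psiL_W:
  assumes X: "X \<in> Arr q1 q2 q3"
  shows "snd (psiL q1 q2 q3 X) \<in> Smat (cZ (length q1) (length q2) (ZofL q3 X)) q3"
proof -
  let ?Z = "ZofL q3 X"
  let ?P = "pos2 (length q1) (length q2) ?Z"
  let ?W = "snd (psiL q1 q2 q3 X)"
  have W: "?W l k = (if l < length ?P then X (fst (?P ! l)) (snd (?P ! l)) k else 0)" for l k
    by (simp add: psiL_def)
  have z: "?W l k = 0" if "length (cZ (length q1) (length q2) ?Z) \<le> l \<or> length q3 \<le> k" for l k
    using that Arr_D(1)[OF X] by (auto simp: W length_cZ_pos2)
  have rs: "(\<Sum>k<length q3. ?W l k) = cZ (length q1) (length q2) ?Z ! l"
    if l: "l < length (cZ (length q1) (length q2) ?Z)" for l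
  proof -
    have l': "l < length ?P" using l by (simp add: length_cZ_pos2)
    have "(\<Sum>k<length q3. ?W l k) = ?Z (fst (?P ! l)) (snd (?P ! l))"
      using l' by (simp add: W ZofL_def)
    thus ?thesis using cZ_nth[OF l'] by simp
  qed
  have cs: "(\<Sum>l<length (cZ (length q1) (length q2) ?Z). ?W l k) = q3 ! k" if k: "k < length q3" for k
  proof -
    have "(\<Sum>l<length (cZ (length q1) (length q2) ?Z). ?W l k) = (\<Sum>l<length ?P. X (fst (?P ! l)) (snd (?P ! l)) k)"
      by (simp add: W length_cZ_pos2)
    also have "\<dots> = (\<Sum>x\<in>set ?P. X (fst x) (snd x) k)"
      by (rule sum_nth_set) (rule distinct_pos2)
    also have "\<dots> = (\<Sum>i<length q1. \<Sum>j<length q2. X i j k)"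
      using sum_pos2[of "length q1" "length q2" ?Z "\<lambda>x. X (fst x) (snd x) k"] ZofL_zero[OF X] by simp
    also have "\<dots> = q3 ! k" using Arr_D(4)[OF X k] .
    finally show ?thesis .
  qed
  show ?thesis unfolding Smat_def using z rs cs by blast
qed

lemma phiL_psiL:
  assumes X: "X \<in> Arr q1 q2 q3"
  shows "phiL q1 q2 (psiL q1 q2 q3 X) = X"
proof (intro ext)
  fix i j k
  let ?Z = "ZofL q3 X"
  let ?P = "pos2 (length q1) (length q2) ?Z"
  show "phiL q1 q2 (psiL q1 q2 q3 X) i j k = X i j k"
  proof (cases "i < length q1 \<and> j < length q2 \<and> ?Z i j \<noteq> 0")
    case True
    hence mem: "(i,j) \<in> set ?P" by (simp add: set_pos2)
    define l where "l = idx ?P (i,j)"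
    have l: "l < length ?P" "?P ! l = (i,j)" using idx_props[OF distinct_pos2 mem] l_def by auto
    have li: "idx ?P (i,j) = l" using l_def by simp
    show ?thesis using True l by (simp add: phiL_def psiL_def li)
  next
    case False
    hence "X i j k = 0" using Arr_D(1)[OF X] ZofL_zero[OF X] by (meson not_le)
    thus ?thesis using False unfolding phiL_def psiL_def by auto
  qed
qed

lemma psiL_phiL:
  assumes Z: "Z \<in> Smat q1 q2" and W: "W \<in> Smat (cZ (length q1) (length q2) Z) q3"
  shows "psiL q1 q2 q3 (phiL q1 q2 (Z,W)) = (Z,W)"
proof -
  have ZZ: "ZofL q3 (phiL q1 q2 (Z,W)) = Z"
  proof (intro ext)
    fix i j
    show "ZofL q3 (phiL q1 q2 (Z,W)) i j = Z i j"
    proof (cases "i < length q1 \<and> j < length q2")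
      case True thus ?thesis using phiL_sum[OF Z W] by (simp add: ZofL_def)
    next
      case False thus ?thesis using phiL_zero[OF W] Smat_D(1)[OF Z] by (auto simp: ZofL_def)
    qed
  qed
  let ?P = "pos2 (length q1) (length q2) Z"
  have WW: "(\<lambda>l k. if l < length ?P then phiL q1 q2 (Z,W) (fst (?P ! l)) (snd (?P ! l)) k else 0) = W"
  proof (intro ext)
    fix l k
    show "(if l < length ?P then phiL q1 q2 (Z,W) (fst (?P ! l)) (snd (?P ! l)) k else 0) = W l k"
      using phiL_nth[of l q1 q2 Z W k] Smat_D(1)[OF W, of l k] by (auto simp: length_cZ_pos2)
  qed
  show ?thesis unfolding psiL_def ZZ WW ..
qed

definition AS where
  "AS q1 q2 q3 c = {X \<in> Arr q1 q2 q3. rd3 (length q1) (length q2) (length q3) X = c}"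

lemma bij_LS: "bij_betw (phiL q1 q2) (LS q1 q2 q3 c) (AS q1 q2 q3 c)"
proof (rule bij_betwI[where g = "psiL q1 q2 q3"])
  show "phiL q1 q2 \<in> LS q1 q2 q3 c \<rightarrow> AS q1 q2 q3 c"
    unfolding LS_def AS_def using phiL_Arr phiL_rd3 by fastforce
  show "psiL q1 q2 q3 \<in> AS q1 q2 q3 c \<rightarrow> LS q1 q2 q3 c"
  proof
    fix X assume "X \<in> AS q1 q2 q3 c"
    hence X: "X \<in> Arr q1 q2 q3" and r: "rd3 (length q1) (length q2) (length q3) X = c"
      by (auto simp: AS_def)
    have ps: "psiL q1 q2 q3 X = (ZofL q3 X, snd (psiL q1 q2 q3 X))" by (simp add: psiL_def)
    have Z: "ZofL q3 X \<in> Smat q1 q2" by (rule psiL_Z[OF X])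
    have W: "snd (psiL q1 q2 q3 X) \<in> Smat (cZ (length q1) (length q2) (ZofL q3 X)) q3" by (rule psiL_W[OF X])
    have "cZ (length (cZ (length q1) (length q2) (ZofL q3 X))) (length q3) (snd (psiL q1 q2 q3 X)) = c"
      using phiL_rd3[OF Z W] phiL_psiL[OF X] r ps by simp
    thus "psiL q1 q2 q3 X \<in> LS q1 q2 q3 c" using Z W ps unfolding LS_def by auto
  qed
  show "psiL q1 q2 q3 (phiL q1 q2 x) = x" if "x \<in> LS q1 q2 q3 c" for x
    using that psiL_phiL unfolding LS_def by auto
  show "phiL q1 q2 (psiL q1 q2 q3 y) = y" if "y \<in> AS q1 q2 q3 c" for y
    using that phiL_psiL unfolding AS_def by auto
qed


definition phiR :: "nat list \<Rightarrow> nat list \<Rightarrow> (nat \<Rightarrow> nat \<Rightarrow> nat) \<times> (nat \<Rightarrow> nat \<Rightarrow> nat) \<Rightarrow> (nat \<Rightarrow> nat \<Rightarrow> nat \<Rightarrow> nat)" where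
  "phiR q2 q3 YV = (\<lambda>i j k. if j < length q2 \<and> k < length q3 \<and> fst YV j k \<noteq> 0
      then snd YV i (idx (pos2 (length q2) (length q3) (fst YV)) (j,k)) else 0)"

definition YofR :: "nat list \<Rightarrow> (nat \<Rightarrow> nat \<Rightarrow> nat \<Rightarrow> nat) \<Rightarrow> nat \<Rightarrow> nat \<Rightarrow> nat" where
  "YofR q1 X = (\<lambda>j k. \<Sum>i<length q1. X i j k)"

definition psiR :: "nat list \<Rightarrow> nat list \<Rightarrow> nat list \<Rightarrow> (nat \<Rightarrow> nat \<Rightarrow> nat \<Rightarrow> nat) \<Rightarrow> (nat \<Rightarrow> nat \<Rightarrow> nat) \<times> (nat \<Rightarrow> nat \<Rightarrow> nat)" where
  "psiR q1 q2 q3 X = (YofR q1 X, (\<lambda>i l. if l < length (pos2 (length q2) (length q3) (YofR q1 X))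
      then X i (fst (pos2 (length q2) (length q3) (YofR q1 X) ! l)) (snd (pos2 (length q2) (length q3) (YofR q1 X) ! l)) else 0))"

definition RS where
  "RS q1 q2 q3 c = {(Y,V). Y \<in> Smat q2 q3 \<and> V \<in> Smat q1 (cZ (length q2) (length q3) Y)
      \<and> cZ (length q1) (length (cZ (length q2) (length q3) Y)) V = c}"

lemma phiR_nth:
  assumes "l < length (pos2 (length q2) (length q3) Y)"
  shows "phiR q2 q3 (Y,V) i (fst (pos2 (length q2) (length q3) Y ! l)) (snd (pos2 (length q2) (length q3) Y ! l)) = V i l"
proof -
  let ?P = "pos2 (length q2) (length q3) Y"
  have "(fst (?P ! l), snd (?P ! l)) = ?P ! l" by simp
  hence i: "idx ?P (fst (?P ! l), snd (?P ! l)) = l" using idx_nth[OF distinct_pos2 assms] by simp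
  show ?thesis using pos2_nth[OF assms] i unfolding phiR_def by simp
qed

lemma phiR_sum:
  assumes Y: "Y \<in> Smat q2 q3" and V: "V \<in> Smat q1 (cZ (length q2) (length q3) Y)"
    and jk: "j < length q2" "k < length q3"
  shows "(\<Sum>i<length q1. phiR q2 q3 (Y,V) i j k) = Y j k"
proof (cases "Y j k = 0")
  case True thus ?thesis by (simp add: phiR_def)
next
  case False
  let ?P = "pos2 (length q2) (length q3) Y"
  have mem: "(j,k) \<in> set ?P" using False jk by (simp add: set_pos2)
  define l where "l = idx ?P (j,k)"
  have l: "l < length ?P" "?P ! l = (j,k)" using idx_props[OF distinct_pos2 mem] l_def by auto
  have "(\<Sum>i<length q1. phiR q2 q3 (Y,V) i j k) = (\<Sum>i<length q1. V i l)"
    using False jk by (simp add: phiR_def l_def)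
  also have "\<dots> = cZ (length q2) (length q3) Y ! l"
    using Smat_D(3)[OF V, of l] l(1) by (simp add: length_cZ_pos2)
  also have "\<dots> = Y j k" using cZ_nth[OF l(1)] l(2) by simp
  finally show ?thesis .
qed

lemma phiR_zero:
  assumes V: "V \<in> Smat q1 (cZ (length q2) (length q3) Y)"
    and "length q1 \<le> i \<or> length q2 \<le> j \<or> length q3 \<le> k"
  shows "phiR q2 q3 (Y,V) i j k = 0"
  using assms Smat_D(1)[OF V] by (auto simp: phiR_def)

lemma phiR_Arr:
  assumes Y: "Y \<in> Smat q2 q3" and V: "V \<in> Smat q1 (cZ (length q2) (length q3) Y)"
  shows "phiR q2 q3 (Y,V) \<in> Arr q1 q2 q3"
proof -
  let ?X = "phiR q2 q3 (Y,V)"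
  let ?P = "pos2 (length q2) (length q3) Y"
  have r1: "(\<Sum>j<length q2. \<Sum>k<length q3. ?X i j k) = q1 ! i" if i: "i < length q1" for i
  proof -
    have "(\<Sum>j<length q2. \<Sum>k<length q3. ?X i j k) = (\<Sum>x\<in>set ?P. ?X i (fst x) (snd x))"
      using sum_pos2[of "length q2" "length q3" Y "\<lambda>x. ?X i (fst x) (snd x)"] by (simp add: phiR_def)
    also have "\<dots> = (\<Sum>l<length ?P. ?X i (fst (?P ! l)) (snd (?P ! l)))"
      by (rule sum_nth_set[symmetric]) (rule distinct_pos2)
    also have "\<dots> = (\<Sum>l<length ?P. V i l)" by (simp add: phiR_nth)
    also have "\<dots> = q1 ! i" using Smat_D(2)[OF V i] by (simp add: length_cZ_pos2)
    finally show ?thesis .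
  qed
  have r2: "(\<Sum>i<length q1. \<Sum>k<length q3. ?X i j k) = q2 ! j" if j: "j < length q2" for j
  proof -
    have "(\<Sum>i<length q1. \<Sum>k<length q3. ?X i j k) = (\<Sum>k<length q3. \<Sum>i<length q1. ?X i j k)"
      by (rule sum.swap)
    also have "\<dots> = (\<Sum>k<length q3. Y j k)" using phiR_sum[OF Y V j] by simp
    also have "\<dots> = q2 ! j" using Smat_D(2)[OF Y j] .
    finally show ?thesis .
  qed
  have r3: "(\<Sum>i<length q1. \<Sum>j<length q2. ?X i j k) = q3 ! k" if k: "k < length q3" for k
  proof -
    have "(\<Sum>i<length q1. \<Sum>j<length q2. ?X i j k) = (\<Sum>j<length q2. \<Sum>i<length q1. ?X i j k)"
      by (rule sum.swap)
    also have "\<dots> = (\<Sum>j<length q2. Y j k)" using phiR_sum[OF Y V _ k] by simp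
    also have "\<dots> = q3 ! k" using Smat_D(3)[OF Y k] .
    finally show ?thesis .
  qed
  show ?thesis unfolding Arr_def using r1 r2 r3 phiR_zero[OF V] by blast
qed

lemma phiR_rd3:
  assumes Y: "Y \<in> Smat q2 q3" and V: "V \<in> Smat q1 (cZ (length q2) (length q3) Y)"
  shows "rd3 (length q1) (length q2) (length q3) (phiR q2 q3 (Y,V))
       = cZ (length q1) (length (cZ (length q2) (length q3) Y)) V"
proof -
  let ?X = "phiR q2 q3 (Y,V)"
  let ?P = "pos2 (length q2) (length q3) Y"
  let ?f = "\<lambda>i. \<lambda>(j,k). ?X i j k"
  have "cZ (length q1) (length (cZ (length q2) (length q3) Y)) V
      = concat (map (\<lambda>i. filter ((<) 0) (map (V i) [0..<length ?P])) [0..<length q1])"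
    by (simp only: length_cZ_pos2 cZ_rows'[of "length q1" "length ?P" V])
  also have "\<dots> = concat (map (\<lambda>i. filter ((<) 0) (map (?f i) (List.product [0..<length q2] [0..<length q3]))) [0..<length q1])"
  proof (rule arg_cong[where f = concat], rule map_cong[OF refl])
    fix i
    have "map (V i) [0..<length ?P] = map (\<lambda>l. ?f i (?P ! l)) [0..<length ?P]"
      by (rule map_cong[OF refl]) (simp add: case_prod_beta phiR_nth)
    also have "\<dots> = map (?f i) ?P" by (rule map_nth_upt)
    finally have e: "map (V i) [0..<length ?P] = map (?f i) ?P" .
    show "filter ((<) 0) (map (V i) [0..<length ?P]) = filter ((<) 0) (map (?f i) (List.product [0..<length q2] [0..<length q3]))"
    proof -
      have "filter ((<) 0) (map (?f i) ?P) = filter ((<) 0) (map (?f i) (List.product [0..<length q2] [0..<length q3]))"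
        unfolding pos2_def by (rule filter_map_filter_zero) (auto simp: phiR_def)
      thus ?thesis by (simp only: e)
    qed
  qed
  also have "\<dots> = rd3 (length q1) (length q2) (length q3) ?X" by (simp add: rd3_B)
  finally show ?thesis by simp
qed

lemma YofR_zero:
  assumes X: "X \<in> Arr q1 q2 q3" and "YofR q1 X j k = 0"
  shows "X i j k = 0"
proof (cases "i < length q1")
  case True
  have "(\<Sum>i<length q1. X i j k) = 0" using assms(2) by (simp add: YofR_def)
  thus ?thesis using True by simp
next
  case False thus ?thesis using Arr_D(1)[OF X] by simp
qed

lemma psiR_Y:
  assumes X: "X \<in> Arr q1 q2 q3"
  shows "YofR q1 X \<in> Smat q2 q3"
proof -
  have z: "YofR q1 X j k = 0" if "length q2 \<le> j \<or> length q3 \<le> k" for j k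
    using that Arr_D(1)[OF X] by (auto simp: YofR_def)
  have rs: "(\<Sum>k<length q3. YofR q1 X j k) = q2 ! j" if j: "j < length q2" for j
  proof -
    have "(\<Sum>k<length q3. \<Sum>i<length q1. X i j k) = (\<Sum>i<length q1. \<Sum>k<length q3. X i j k)"
      by (rule sum.swap)
    thus ?thesis using Arr_D(3)[OF X j] by (simp add: YofR_def)
  qed
  have cs: "(\<Sum>j<length q2. YofR q1 X j k) = q3 ! k" if k: "k < length q3" for k
  proof -
    have "(\<Sum>j<length q2. \<Sum>i<length q1. X i j k) = (\<Sum>i<length q1. \<Sum>j<length q2. X i j k)"
      by (rule sum.swap)
    thus ?thesis using Arr_D(4)[OF X k] by (simp add: YofR_def)
  qed
  show ?thesis unfolding Smat_def using z rs cs by blast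
qed

lemma psiR_V:
  assumes X: "X \<in> Arr q1 q2 q3"
  shows "snd (psiR q1 q2 q3 X) \<in> Smat q1 (cZ (length q2) (length q3) (YofR q1 X))"
proof -
  let ?Y = "YofR q1 X"
  let ?P = "pos2 (length q2) (length q3) ?Y"
  let ?V = "snd (psiR q1 q2 q3 X)"
  have V: "?V i l = (if l < length ?P then X i (fst (?P ! l)) (snd (?P ! l)) else 0)" for i l
    by (simp add: psiR_def)
  have z: "?V i l = 0" if "length q1 \<le> i \<or> length (cZ (length q2) (length q3) ?Y) \<le> l" for i l
    using that Arr_D(1)[OF X] by (auto simp: V length_cZ_pos2)
  have cs: "(\<Sum>i<length q1. ?V i l) = cZ (length q2) (length q3) ?Y ! l"
    if l: "l < length (cZ (length q2) (length q3) ?Y)" for l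
  proof -
    have l': "l < length ?P" using l by (simp add: length_cZ_pos2)
    have "(\<Sum>i<length q1. ?V i l) = ?Y (fst (?P ! l)) (snd (?P ! l))"
      using l' by (simp add: V YofR_def)
    thus ?thesis using cZ_nth[OF l'] by simp
  qed
  have rs: "(\<Sum>l<length (cZ (length q2) (length q3) ?Y). ?V i l) = q1 ! i" if i: "i < length q1" for i
  proof -
    have "(\<Sum>l<length (cZ (length q2) (length q3) ?Y). ?V i l) = (\<Sum>l<length ?P. X i (fst (?P ! l)) (snd (?P ! l)))"
      by (simp add: V length_cZ_pos2)
    also have "\<dots> = (\<Sum>x\<in>set ?P. X i (fst x) (snd x))"
      by (rule sum_nth_set) (rule distinct_pos2)
    also have "\<dots> = (\<Sum>j<length q2. \<Sum>k<length q3. X i j k)"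
      using sum_pos2[of "length q2" "length q3" ?Y "\<lambda>x. X i (fst x) (snd x)"] YofR_zero[OF X] by simp
    also have "\<dots> = q1 ! i" using Arr_D(2)[OF X i] .
    finally show ?thesis .
  qed
  show ?thesis unfolding Smat_def using z rs cs by blast
qed

lemma phiR_psiR:
  assumes X: "X \<in> Arr q1 q2 q3"
  shows "phiR q2 q3 (psiR q1 q2 q3 X) = X"
proof (intro ext)
  fix i j k
  let ?Y = "YofR q1 X"
  let ?P = "pos2 (length q2) (length q3) ?Y"
  show "phiR q2 q3 (psiR q1 q2 q3 X) i j k = X i j k"
  proof (cases "j < length q2 \<and> k < length q3 \<and> ?Y j k \<noteq> 0")
    case True
    hence mem: "(j,k) \<in> set ?P" by (simp add: set_pos2)
    define l where "l = idx ?P (j,k)"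
    have l: "l < length ?P" "?P ! l = (j,k)" using idx_props[OF distinct_pos2 mem] l_def by auto
    have li: "idx ?P (j,k) = l" using l_def by simp
    show ?thesis using True l by (simp add: phiR_def psiR_def li)
  next
    case False
    hence "X i j k = 0" using Arr_D(1)[OF X] YofR_zero[OF X] by (meson not_le)
    thus ?thesis using False unfolding phiR_def psiR_def by auto
  qed
qed

lemma psiR_phiR:
  assumes Y: "Y \<in> Smat q2 q3" and V: "V \<in> Smat q1 (cZ (length q2) (length q3) Y)"
  shows "psiR q1 q2 q3 (phiR q2 q3 (Y,V)) = (Y,V)"
proof -
  have YY: "YofR q1 (phiR q2 q3 (Y,V)) = Y"
  proof (intro ext)
    fix j k
    show "YofR q1 (phiR q2 q3 (Y,V)) j k = Y j k"
    proof (cases "j < length q2 \<and> k < length q3")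
      case True thus ?thesis using phiR_sum[OF Y V] by (simp add: YofR_def)
    next
      case False thus ?thesis using phiR_zero[OF V] Smat_D(1)[OF Y] by (auto simp: YofR_def)
    qed
  qed
  let ?P = "pos2 (length q2) (length q3) Y"
  have VV: "(\<lambda>i l. if l < length ?P then phiR q2 q3 (Y,V) i (fst (?P ! l)) (snd (?P ! l)) else 0) = V"
  proof (intro ext)
    fix i l
    show "(if l < length ?P then phiR q2 q3 (Y,V) i (fst (?P ! l)) (snd (?P ! l)) else 0) = V i l"
      using phiR_nth[of l q2 q3 Y V i] Smat_D(1)[OF V, of i l] by (auto simp: length_cZ_pos2)
  qed
  show ?thesis unfolding psiR_def YY VV ..
qed

lemma bij_RS: "bij_betw (phiR q2 q3) (RS q1 q2 q3 c) (AS q1 q2 q3 c)"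
proof (rule bij_betwI[where g = "psiR q1 q2 q3"])
  show "phiR q2 q3 \<in> RS q1 q2 q3 c \<rightarrow> AS q1 q2 q3 c"
    unfolding RS_def AS_def using phiR_Arr phiR_rd3 by fastforce
  show "psiR q1 q2 q3 \<in> AS q1 q2 q3 c \<rightarrow> RS q1 q2 q3 c"
  proof
    fix X assume "X \<in> AS q1 q2 q3 c"
    hence X: "X \<in> Arr q1 q2 q3" and r: "rd3 (length q1) (length q2) (length q3) X = c"
      by (auto simp: AS_def)
    have ps: "psiR q1 q2 q3 X = (YofR q1 X, snd (psiR q1 q2 q3 X))" by (simp add: psiR_def)
    have Y: "YofR q1 X \<in> Smat q2 q3" by (rule psiR_Y[OF X])
    have V: "snd (psiR q1 q2 q3 X) \<in> Smat q1 (cZ (length q2) (length q3) (YofR q1 X))" by (rule psiR_V[OF X])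
    have "cZ (length q1) (length (cZ (length q2) (length q3) (YofR q1 X))) (snd (psiR q1 q2 q3 X)) = c"
      using phiR_rd3[OF Y V] phiR_psiR[OF X] r ps by simp
    thus "psiR q1 q2 q3 X \<in> RS q1 q2 q3 c" using Y V ps unfolding RS_def by auto
  qed
  show "psiR q1 q2 q3 (phiR q2 q3 x) = x" if "x \<in> RS q1 q2 q3 c" for x
    using that psiR_phiR unfolding RS_def by auto
  show "phiR q2 q3 (psiR q1 q2 q3 y) = y" if "y \<in> AS q1 q2 q3 c" for y
    using that phiR_psiR unfolding AS_def by auto
qed


lemma card_group:
  assumes A: "finite A" and C: "finite C" and fA: "f ` A \<subseteq> C" and G: "\<forall>r\<in>C. finite (G r)"
  shows "card {(Z,W). Z \<in> A \<and> W \<in> G (f Z)} = (\<Sum>r\<in>C. card {Z\<in>A. f Z = r} * card (G r))"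
proof -
  have e: "{(Z,W). Z \<in> A \<and> W \<in> G (f Z)} = (\<Union>r\<in>C. {Z\<in>A. f Z = r} \<times> G r)"
    using fA by auto
  have "card (\<Union>r\<in>C. {Z\<in>A. f Z = r} \<times> G r) = (\<Sum>r\<in>C. card ({Z\<in>A. f Z = r} \<times> G r))"
    by (rule card_UN_disjoint) (use A C G in auto)
  thus ?thesis unfolding e by (simp add: card_cartesian_product)
qed

lemma LS_count:
  assumes "q1 \<in> compositions n"
  shows "int (card (LS q1 q2 q3 c)) = (\<Sum>r\<in>compositions n. Bprod q1 q2 r * Bprod r q3 c)"
proof -
  have e: "LS q1 q2 q3 c = {(Z,W). Z \<in> Smat q1 q2 \<and> W \<in> (\<lambda>r. {W \<in> Smat r q3. cZ (length r) (length q3) W = c}) (cZ (length q1) (length q2) Z)}"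
    unfolding LS_def by auto
  have "card (LS q1 q2 q3 c) = (\<Sum>r\<in>compositions n. card {Z \<in> Smat q1 q2. cZ (length q1) (length q2) Z = r} * card {W \<in> Smat r q3. cZ (length r) (length q3) W = c})"
    unfolding e
    by (rule card_group) (use assms cZ_compositions finite_Smat finite_compositions in auto)
  thus ?thesis unfolding Bprod_def by simp
qed

lemma RS_count:
  assumes "q2 \<in> compositions n"
  shows "int (card (RS q1 q2 q3 c)) = (\<Sum>r\<in>compositions n. Bprod q2 q3 r * Bprod q1 r c)"
proof -
  have e: "RS q1 q2 q3 c = {(Y,V). Y \<in> Smat q2 q3 \<and> V \<in> (\<lambda>r. {V \<in> Smat q1 r. cZ (length q1) (length r) V = c}) (cZ (length q2) (length q3) Y)}"
    unfolding RS_def by auto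
  have "card (RS q1 q2 q3 c) = (\<Sum>r\<in>compositions n. card {Y \<in> Smat q2 q3. cZ (length q2) (length q3) Y = r} * card {V \<in> Smat q1 r. cZ (length q1) (length r) V = c})"
    unfolding e
    by (rule card_group) (use assms cZ_compositions finite_Smat finite_compositions in auto)
  thus ?thesis unfolding Bprod_def by (simp add: mult.commute)
qed

lemma assoc_int:
  assumes "q1 \<in> compositions n" "q2 \<in> compositions n"
  shows "(\<Sum>r\<in>compositions n. Bprod q1 q2 r * Bprod r q3 c) = (\<Sum>r\<in>compositions n. Bprod q2 q3 r * Bprod q1 r c)"
proof -
  have "card (LS q1 q2 q3 c) = card (AS q1 q2 q3 c)" by (rule bij_betw_same_card[OF bij_LS])
  also have "\<dots> = card (RS q1 q2 q3 c)" by (rule bij_betw_same_card[OF bij_RS, symmetric])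
  finally have "int (card (LS q1 q2 q3 c)) = int (card (RS q1 q2 q3 c))" by simp
  thus ?thesis unfolding LS_count[OF assms(1)] RS_count[OF assms(2)] .
qed

definition RM :: "nat \<Rightarrow> (nat list \<Rightarrow> int) \<Rightarrow> (nat list \<Rightarrow> int) \<Rightarrow> nat list \<Rightarrow> int" where
  "RM n x y c = (\<Sum>q\<in>compositions n. \<Sum>r\<in>compositions n. x q * y r * Bprod q r c)"

lemma dmult_RM: "dmult n p x y c = RM n x y c mod int p"
  by (simp add: dmult_def RM_def)

lemma sum_mod_cong:
  assumes "\<And>i. i \<in> A \<Longrightarrow> f i mod m = g i mod (m::int)"
  shows "sum f A mod m = sum g A mod m"
proof -
  have "sum f A mod m = (\<Sum>i\<in>A. f i mod m) mod m" by (simp add: mod_sum_eq)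
  also have "\<dots> = (\<Sum>i\<in>A. g i mod m) mod m" using assms by (simp cong: sum.cong)
  also have "\<dots> = sum g A mod m" by (simp add: mod_sum_eq)
  finally show ?thesis .
qed

lemma RM_mod_cong:
  assumes "\<And>q. q \<in> compositions n \<Longrightarrow> x q mod int p = x' q mod int p"
    and "\<And>r. r \<in> compositions n \<Longrightarrow> y r mod int p = y' r mod int p"
  shows "RM n x y c mod int p = RM n x' y' c mod int p"
  unfolding RM_def
proof (rule sum_mod_cong, rule sum_mod_cong)
  fix q r assume q: "q \<in> compositions n" and r: "r \<in> compositions n"
  let ?m = "int p"
  have 1: "x q * y r mod ?m = (x q mod ?m) * (y r mod ?m) mod ?m" by (simp add: mod_mult_eq)
  have 2: "x' q * y' r mod ?m = (x' q mod ?m) * (y' r mod ?m) mod ?m" by (simp add: mod_mult_eq)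
  have e: "x q * y r mod ?m = x' q * y' r mod ?m" unfolding 1 2 using assms q r by simp
  have "x q * y r * Bprod q r c mod ?m = (x q * y r mod ?m) * Bprod q r c mod ?m"
    by (simp add: mod_mult_left_eq)
  also have "\<dots> = (x' q * y' r mod ?m) * Bprod q r c mod ?m" unfolding e ..
  also have "\<dots> = x' q * y' r * Bprod q r c mod ?m"
    by (simp add: mod_mult_left_eq)
  finally show "x q * y r * Bprod q r c mod int p = x' q * y' r * Bprod q r c mod int p" .
qed

lemma swap3: "(\<Sum>a\<in>A. \<Sum>b\<in>A. \<Sum>c\<in>A. f a b c) = (\<Sum>b\<in>A. \<Sum>c\<in>A. \<Sum>a\<in>A. (f a b c :: int))"
proof -
  have "(\<Sum>a\<in>A. \<Sum>b\<in>A. \<Sum>c\<in>A. f a b c) = (\<Sum>b\<in>A. \<Sum>a\<in>A. \<Sum>c\<in>A. f a b c)"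
    by (rule sum.swap)
  also have "\<dots> = (\<Sum>b\<in>A. \<Sum>c\<in>A. \<Sum>a\<in>A. f a b c)"
    by (rule sum.cong[OF refl]) (rule sum.swap)
  finally show ?thesis .
qed

lemma RM_L:
  shows "(\<Sum>q\<in>A. \<Sum>r\<in>A. (x q::int) * (\<Sum>q'\<in>A. \<Sum>r'\<in>A. g q' r' r) * h q r)
   = (\<Sum>q\<in>A. \<Sum>q'\<in>A. \<Sum>r'\<in>A. \<Sum>r\<in>A. x q * g q' r' r * h q r)"
proof -
  have "(\<Sum>q\<in>A. \<Sum>r\<in>A. x q * (\<Sum>q'\<in>A. \<Sum>r'\<in>A. g q' r' r) * h q r)
      = (\<Sum>q\<in>A. \<Sum>r\<in>A. \<Sum>q'\<in>A. \<Sum>r'\<in>A. x q * g q' r' r * h q r)"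
    by (simp add: sum_distrib_left sum_distrib_right)
  also have "\<dots> = (\<Sum>q\<in>A. \<Sum>q'\<in>A. \<Sum>r'\<in>A. \<Sum>r\<in>A. x q * g q' r' r * h q r)"
    by (rule sum.cong[OF refl]) (rule swap3)
  finally show ?thesis .
qed

lemma RM_R:
  shows "(\<Sum>r\<in>A. \<Sum>r'\<in>A. (\<Sum>q\<in>A. \<Sum>q'\<in>A. g q q' r) * (z r'::int) * h r r')
   = (\<Sum>q\<in>A. \<Sum>q'\<in>A. \<Sum>r'\<in>A. \<Sum>r\<in>A. g q q' r * z r' * h r r')"
proof -
  have "(\<Sum>r\<in>A. \<Sum>r'\<in>A. (\<Sum>q\<in>A. \<Sum>q'\<in>A. g q q' r) * z r' * h r r')
      = (\<Sum>r\<in>A. \<Sum>r'\<in>A. \<Sum>q\<in>A. \<Sum>q'\<in>A. g q q' r * z r' * h r r')"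
    by (simp add: sum_distrib_left sum_distrib_right)
  also have "\<dots> = (\<Sum>r'\<in>A. \<Sum>q\<in>A. \<Sum>q'\<in>A. \<Sum>r\<in>A. g q q' r * z r' * h r r')"
  proof -
    have "(\<Sum>r\<in>A. \<Sum>r'\<in>A. \<Sum>q\<in>A. \<Sum>q'\<in>A. g q q' r * z r' * h r r')
        = (\<Sum>r'\<in>A. \<Sum>q\<in>A. \<Sum>r\<in>A. \<Sum>q'\<in>A. g q q' r * z r' * h r r')"
      by (rule swap3)
    also have "\<dots> = (\<Sum>r'\<in>A. \<Sum>q\<in>A. \<Sum>q'\<in>A. \<Sum>r\<in>A. g q q' r * z r' * h r r')"
      by (rule sum.cong[OF refl], rule sum.cong[OF refl], rule sum.swap)
    finally show ?thesis .
  qed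
  also have "\<dots> = (\<Sum>q\<in>A. \<Sum>q'\<in>A. \<Sum>r'\<in>A. \<Sum>r\<in>A. g q q' r * z r' * h r r')"
    by (rule swap3)
  finally show ?thesis .
qed

lemma RM_assoc:
  assumes "\<And>q. q \<notin> compositions n \<Longrightarrow> True"
  shows "RM n x (RM n y z) c = RM n (RM n x y) z c"
proof -
  let ?C = "compositions n"
  have L: "RM n x (RM n y z) c = (\<Sum>q\<in>?C. \<Sum>q'\<in>?C. \<Sum>r'\<in>?C. \<Sum>r\<in>?C. x q * (y q' * z r' * Bprod q' r' r) * Bprod q r c)"
    unfolding RM_def by (rule RM_L)
  have R: "RM n (RM n x y) z c = (\<Sum>q\<in>?C. \<Sum>q'\<in>?C. \<Sum>r'\<in>?C. \<Sum>r\<in>?C. x q * y q' * Bprod q q' r * z r' * Bprod r r' c)"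
    unfolding RM_def by (rule RM_R)
  have H: "\<And>q q' r'. q \<in> ?C \<Longrightarrow> q' \<in> ?C \<Longrightarrow>
     (\<Sum>r\<in>?C. x q * (y q' * z r' * Bprod q' r' r) * Bprod q r c)
   = (\<Sum>r\<in>?C. x q * y q' * Bprod q q' r * z r' * Bprod r r' c)"
  proof -
    fix q q' r' assume q: "q \<in> ?C" and q': "q' \<in> ?C"
    have "(\<Sum>r\<in>?C. x q * (y q' * z r' * Bprod q' r' r) * Bprod q r c)
        = (x q * y q' * z r') * (\<Sum>r\<in>?C. Bprod q' r' r * Bprod q r c)"
      by (simp add: sum_distrib_left mult_ac)
    also have "\<dots> = (x q * y q' * z r') * (\<Sum>r\<in>?C. Bprod q q' r * Bprod r r' c)"
      using assoc_int[OF q q', of r' c] by simp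
    also have "\<dots> = (\<Sum>r\<in>?C. x q * y q' * Bprod q q' r * z r' * Bprod r r' c)"
      by (simp add: sum_distrib_left mult_ac)
    finally show "(\<Sum>r\<in>?C. x q * (y q' * z r' * Bprod q' r' r) * Bprod q r c)
   = (\<Sum>r\<in>?C. x q * y q' * Bprod q q' r * z r' * Bprod r r' c)" .
  qed
  show ?thesis unfolding L R
    by (rule sum.cong[OF refl], rule sum.cong[OF refl], rule sum.cong[OF refl], rule H)
qed

lemma dmult_assoc: "dmult n p x (dmult n p y z) = dmult n p (dmult n p x y) z"
proof (intro ext)
  fix c
  have "dmult n p x (dmult n p y z) c = RM n x (RM n y z) c mod int p"
    unfolding dmult_RM by (rule RM_mod_cong) (simp_all add: dmult_RM)
  also have "\<dots> = RM n (RM n x y) z c mod int p" by (simp add: RM_assoc)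
  also have "\<dots> = dmult n p (dmult n p x y) z c"
    unfolding dmult_RM by (rule RM_mod_cong) (simp_all add: dmult_RM)
  finally show "dmult n p x (dmult n p y z) c = dmult n p (dmult n p x y) z c" .
qed


lemma funpow_in:
  assumes "\<forall>x\<in>S. f x \<in> S" "x \<in> S"
  shows "(f ^^ d) x \<in> S"
  using assms by (induction d) auto

lemma orbit_dvd:
  assumes "finite S" "0 < p" "\<forall>x\<in>S. f x \<in> S" "\<forall>x\<in>S. (f ^^ p) x = x"
    "\<forall>x\<in>S. \<forall>d. 0 < d \<and> d < p \<longrightarrow> (f ^^ d) x \<noteq> x"
  shows "p dvd card S"
  using assms
proof (induction "card S" arbitrary: S rule: less_induct)
  case less
  show ?case
  proof (cases "S = {}")
    case True thus ?thesis by simp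
  next
    case False
    then obtain x where x: "x \<in> S" by blast
    define Ob where "Ob = (\<lambda>d. (f ^^ d) x) ` {..<p}"
    have ObS: "Ob \<subseteq> S" unfolding Ob_def using funpow_in[OF less.prems(3) x] by auto
    have inj: "inj_on (\<lambda>d. (f ^^ d) x) {..<p}"
    proof (rule inj_onI)
      fix i j assume i: "i \<in> {..<p}" and j: "j \<in> {..<p}" and e: "(f ^^ i) x = (f ^^ j) x"
      show "i = j"
      proof (rule ccontr)
        assume "i \<noteq> j"
        then obtain a b where ab: "a < b" "b < p" "(f ^^ a) x = (f ^^ b) x"
          using i j e by (metis lessThan_iff linorder_neqE_nat)
        have "(f ^^ (p - b)) ((f ^^ a) x) = (f ^^ (p - b)) ((f ^^ b) x)" using ab(3) by simp
        moreover have "(f ^^ (p - b + a)) x = (f ^^ (p - b)) ((f ^^ a) x)" by (simp add: funpow_add)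
        moreover have pb: "p = (p - b) + b" using ab by simp
        have "(f ^^ p) x = (f ^^ (p - b)) ((f ^^ b) x)" by (subst pb) (simp add: funpow_add)
        ultimately have "(f ^^ (p - b + a)) x = (f ^^ p) x" by simp
        hence "(f ^^ (p - b + a)) x = x" using less.prems(4) x by simp
        moreover have "0 < p - b + a" "p - b + a < p" using ab by auto
        ultimately show False using less.prems(5) x by blast
      qed
    qed
    have cOb: "card Ob = p" unfolding Ob_def using card_image[OF inj] by simp
    have inv: "\<forall>y\<in>S - Ob. f y \<in> S - Ob"
    proof
      fix y assume y: "y \<in> S - Ob"
      have fy: "f y \<in> S" using y less.prems(3) by auto
      show "f y \<in> S - Ob"
      proof (rule ccontr)
        assume "f y \<notin> S - Ob"
        then obtain d where d: "d < p" "f y = (f ^^ d) x" using fy unfolding Ob_def by auto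
        have "(f ^^ (p - 1)) (f y) = (f ^^ p) y"
          using less.prems(2) by (metis Suc_diff_1 comp_apply funpow_Suc_right)
        hence yy: "y = (f ^^ (p - 1)) ((f ^^ d) x)" using less.prems(4) y d by auto
        show False
        proof (cases d)
          case 0
          hence "y = (f ^^ (p - 1)) x" using yy by simp
          moreover have "p - 1 < p" using less.prems(2) by simp
          ultimately show False using y unfolding Ob_def by auto
        next
          case (Suc e)
          have "y = (f ^^ (p - 1 + d)) x" using yy by (simp only: funpow_add comp_apply)
          also have "p - 1 + d = e + p" using less.prems(2) Suc by simp
          also have "(f ^^ (e + p)) x = (f ^^ e) x" using less.prems(4) x by (simp add: funpow_add)
          finally have "y = (f ^^ e) x" .
          moreover have "e < p" using d Suc by simp
          ultimately show False using y unfolding Ob_def by auto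
        qed
      qed
    qed
    have fin: "finite (S - Ob)" using less.prems(1) by simp
    have finOb: "finite Ob" using finite_subset[OF ObS less.prems(1)] .
    have cd: "card (S - Ob) = card S - p" using card_Diff_subset[OF finOb ObS] cOb by simp
    have ple: "p \<le> card S" using card_mono[OF less.prems(1) ObS] cOb by simp
    have lt: "card (S - Ob) < card S" using cd ple less.prems(2) by simp
    have "p dvd card (S - Ob)"
      by (rule less.hyps[OF lt fin less.prems(2) inv]) (use less.prems(4,5) in auto)
    hence "p dvd card S - p" using cd by simp
    thus ?thesis using ple by (metis dvd_diffD dvd_refl)
  qed
qed


definition cyc :: "nat list \<Rightarrow> nat \<Rightarrow> nat" where
  "cyc J j = (if j \<in> set J then J ! ((idx J j + 1) mod length J) else j)"

lemma cyc_nth: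
  assumes "distinct J" "l < length J"
  shows "cyc J (J ! l) = J ! ((l + 1) mod length J)"
  using assms idx_nth[OF assms] by (simp add: cyc_def)

lemma cyc_pow_nth:
  assumes "distinct J" "l < length J"
  shows "(cyc J ^^ d) (J ! l) = J ! ((l + d) mod length J)"
proof (induction d)
  case 0 thus ?case using assms by simp
next
  case (Suc d)
  have lt: "(l + d) mod length J < length J" using assms(2) by (intro mod_less_divisor) linarith
  have "(cyc J ^^ Suc d) (J ! l) = cyc J (J ! ((l + d) mod length J))" using Suc by simp
  also have "\<dots> = J ! (((l + d) mod length J + 1) mod length J)" by (rule cyc_nth[OF assms(1) lt])
  also have "((l + d) mod length J + 1) mod length J = (l + Suc d) mod length J"
    by (metis add.commute add_Suc mod_add_left_eq plus_1_eq_Suc)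
  finally show ?case .
qed

lemma cyc_pow_out: "j \<notin> set J \<Longrightarrow> (cyc J ^^ d) j = j"
  by (induction d) (auto simp: cyc_def)

lemma cyc_pow_len:
  assumes "distinct J"
  shows "(cyc J ^^ length J) j = j"
proof (cases "j \<in> set J")
  case True
  then obtain l where l: "l < length J" "j = J ! l" by (auto simp: in_set_conv_nth)
  thus ?thesis using cyc_pow_nth[OF assms l(1), of "length J"] by simp
next
  case False thus ?thesis by (rule cyc_pow_out)
qed

lemma cyc_mem:
  assumes "distinct J" "j \<in> set J"
  shows "cyc J j \<in> set J"
proof -
  obtain l where l: "l < length J" "j = J ! l" using assms(2) by (auto simp: in_set_conv_nth)
  have "length J > 0" using l(1) by linarith
  thus ?thesis using cyc_nth[OF assms(1) l(1)] l by simp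
qed

lemma cyc_lt:
  assumes "distinct J" "set J \<subseteq> {..<t}" "j < t"
  shows "cyc J j < t"
  using cyc_mem[OF assms(1)] assms by (cases "j \<in> set J") (auto simp: cyc_def)

lemma cyc_ge:
  assumes "set J \<subseteq> {..<t}" "t \<le> j"
  shows "cyc J j = j"
  using assms by (auto simp: cyc_def)

lemma cyc_val:
  assumes "distinct J" "\<forall>j\<in>set J. r ! j = a"
  shows "r ! (cyc J j) = r ! j"
  using cyc_mem[OF assms(1)] assms by (cases "j \<in> set J") (auto simp: cyc_def)

lemma cyc_bij:
  assumes "distinct J" "set J \<subseteq> {..<t}" "0 < length J"
  shows "bij_betw (cyc J) {..<t} {..<t}"
proof -
  obtain m where e: "length J = Suc m" using assms(3) by (cases "length J") auto
  have pl: "(cyc J ^^ Suc m) x = x" for x using cyc_pow_len[OF assms(1), of x] e by simp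
  show ?thesis
  proof (rule bij_betwI[where g = "cyc J ^^ m"])
    have mm: "\<forall>x\<in>{..<t}. cyc J x \<in> {..<t}" using cyc_lt[OF assms(1,2)] by simp
    show "cyc J \<in> {..<t} \<rightarrow> {..<t}" using mm by auto
    show "cyc J ^^ m \<in> {..<t} \<rightarrow> {..<t}" using funpow_in[OF mm] by auto
    show "(cyc J ^^ m) (cyc J x) = x" for x
      using pl[of x] by (simp only: funpow_Suc_right comp_apply)
    show "cyc J ((cyc J ^^ m) y) = y" for y
      using pl[of y] by simp
  qed
qed

definition act :: "nat list \<Rightarrow> (nat \<Rightarrow> nat \<Rightarrow> nat) \<Rightarrow> (nat \<Rightarrow> nat \<Rightarrow> nat)" where
  "act J Z = (\<lambda>i j. Z i (cyc J j))"

lemma act_pow: "(act J ^^ d) Z = (\<lambda>i j. Z i ((cyc J ^^ d) j))"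
proof (induction d)
  case 0 thus ?case by simp
next
  case (Suc d)
  have "(act J ^^ Suc d) Z = act J ((act J ^^ d) Z)" by simp
  also have "\<dots> = (\<lambda>i j. Z i ((cyc J ^^ d) (cyc J j)))" by (simp add: Suc act_def)
  also have "\<dots> = (\<lambda>i j. Z i ((cyc J ^^ Suc d) j))" by (simp only: funpow_Suc_right comp_apply)
  finally show ?case .
qed

lemma length_filter_nz_card:
  "length (filter (\<lambda>x. x \<noteq> 0) (map f [0..<t])) = card {j. j < t \<and> f j \<noteq> 0}"
proof -
  have "length (filter (\<lambda>x. x \<noteq> 0) (map f [0..<t])) = length (filter (\<lambda>j. f j \<noteq> 0) [0..<t])"
    by (simp add: filter_map comp_def)
  also have "\<dots> = card (set (filter (\<lambda>j. f j \<noteq> 0) [0..<t]))"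
    by (rule distinct_card[symmetric]) simp
  also have "set (filter (\<lambda>j. f j \<noteq> 0) [0..<t]) = {j. j < t \<and> f j \<noteq> 0}" by auto
  finally show ?thesis .
qed

lemma Bprod_diag_dvd:
  assumes qpos: "\<forall>x\<in>set q. 0 < x" and rpos: "\<forall>x\<in>set r. 0 < x"
    and J: "distinct J" "length J = p" "set J \<subseteq> {..<length r}" "\<forall>j\<in>set J. r ! j = a"
    and p: "1 < p"
  shows "p dvd card {Z \<in> Smat q r. cZ (length q) (length r) Z = q}"
proof -
  let ?S = "{Z \<in> Smat q r. cZ (length q) (length r) Z = q}"
  let ?t = "length r" and ?s = "length q"
  have bij: "bij_betw (cyc J) {..<?t} {..<?t}" using cyc_bij[OF J(1) J(3)] J(2) p by simp
  have fin: "finite ?S" using finite_Smat by simp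
  have maps: "\<forall>Z\<in>?S. act J Z \<in> ?S"
  proof
    fix Z assume "Z \<in> ?S"
    hence Z: "Z \<in> Smat q r" and cq: "cZ ?s ?t Z = q" by auto
    have Z': "act J Z \<in> Smat q r"
    proof -
      have z: "act J Z i j = 0" if "?s \<le> i \<or> ?t \<le> j" for i j
        using that Smat_D(1)[OF Z] cyc_ge[OF J(3)] by (auto simp: act_def)
      have rs: "(\<Sum>j<?t. act J Z i j) = q ! i" if "i < ?s" for i
      proof -
        have "(\<Sum>j<?t. act J Z i j) = (\<Sum>j<?t. Z i j)"
          unfolding act_def by (rule sum.reindex_bij_betw[OF bij])
        thus ?thesis using Smat_D(2)[OF Z that] by simp
      qed
      have cs: "(\<Sum>i<?s. act J Z i j) = r ! j" if "j < ?t" for j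
        using Smat_D(3)[OF Z cyc_lt[OF J(1) J(3) that]] cyc_val[OF J(1) J(4)] by (simp add: act_def)
      show ?thesis unfolding Smat_def using z rs cs by blast
    qed
    have "length (cZ ?s ?t (act J Z)) = length (cZ ?s ?t Z)"
    proof -
      let ?A = "{(i,j). i < ?s \<and> j < ?t \<and> act J Z i j \<noteq> 0}"
      let ?B = "{(i,j). i < ?s \<and> j < ?t \<and> Z i j \<noteq> 0}"
      let ?h = "\<lambda>(i,j). (i, cyc J j)"
      have inj: "inj_on ?h ?A"
        using bij unfolding bij_betw_def inj_on_def by auto
      have img: "?h ` ?A = ?B"
      proof
        show "?h ` ?A \<subseteq> ?B" using cyc_lt[OF J(1) J(3)] by (auto simp: act_def)
        show "?B \<subseteq> ?h ` ?A"
        proof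
          fix x assume "x \<in> ?B"
          then obtain i j where x: "x = (i,j)" "i < ?s" "j < ?t" "Z i j \<noteq> 0" by auto
          have "j \<in> cyc J ` {..<?t}" using bij x(3) unfolding bij_betw_def by auto
          then obtain j' where j': "j' < ?t" "cyc J j' = j" by auto
          have "(i, j') \<in> ?A" using x j' by (auto simp: act_def)
          thus "x \<in> ?h ` ?A" using x j' by force
        qed
      qed
      have "card ?A = card ?B" using card_image[OF inj] img by simp
      thus ?thesis by (simp add: length_cZ_card)
    qed
    hence "length (cZ ?s ?t (act J Z)) = ?s" using cq by simp
    hence "cZ ?s ?t (act J Z) = q" using cZ_eq_rows(1)[OF Z' qpos] by simp
    thus "act J Z \<in> ?S" using Z' by simp
  qed
  have per: "\<forall>Z\<in>?S. (act J ^^ p) Z = Z"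
    using cyc_pow_len[OF J(1)] J(2) by (simp add: act_pow)
  have free: "\<forall>Z\<in>?S. \<forall>d. 0 < d \<and> d < p \<longrightarrow> (act J ^^ d) Z \<noteq> Z"
  proof (intro ballI allI impI notI)
    fix Z d assume ZS: "Z \<in> ?S" and d: "0 < d \<and> d < p" and e: "(act J ^^ d) Z = Z"
    have Z: "Z \<in> Smat q r" and cq: "cZ ?s ?t Z = q" using ZS by auto
    have p0: "0 < length J" using J(2) p by simp
    let ?j0 = "J ! 0" and ?j1 = "J ! d"
    have j0: "?j0 < ?t" using J(3) nth_mem[OF p0] by blast
    have "d < length J" using J(2) d by simp
    hence j1: "?j1 < ?t" using J(3) nth_mem[of d J] by blast
    have neq: "?j0 \<noteq> ?j1" using J(1,2) d p0 nth_eq_iff_index_eq by fastforce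
    have pw: "(cyc J ^^ d) ?j0 = ?j1" using cyc_pow_nth[OF J(1) p0, of d] J(2) d by simp
    have "(\<Sum>i<?s. Z i ?j0) = r ! ?j0" by (rule Smat_D(3)[OF Z j0])
    moreover have "r ! ?j0 > 0" using rpos j0 by simp
    ultimately obtain i where i: "i < ?s" "Z i ?j0 \<noteq> 0"
      by (metis lessThan_iff less_not_refl sum.neutral)
    have "Z i ?j1 = Z i ?j0" using fun_cong[OF fun_cong[OF e, of i], of ?j0] pw by (simp add: act_pow)
    hence i1: "Z i ?j1 \<noteq> 0" using i by simp
    have "length (cZ ?s ?t Z) = ?s" using cq by simp
    hence one: "length (filter (\<lambda>x. x \<noteq> 0) (map (Z i) [0..<?t])) = 1"
      using cZ_eq_rows(2)[OF Z qpos] i(1) by blast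
    have "{?j0, ?j1} \<subseteq> {j. j < ?t \<and> Z i j \<noteq> 0}" using i i1 j0 j1 by auto
    hence "card {?j0, ?j1} \<le> card {j. j < ?t \<and> Z i j \<noteq> 0}" by (rule card_mono[rotated]) auto
    thus False using one neq unfolding length_filter_nz_card by simp
  qed
  show ?thesis by (rule orbit_dvd[OF fin _ maps per free]) (use p in simp)
qed

lemma count_list_filter_idx: "count_list xs a = length (filter (\<lambda>j. xs ! j = a) [0..<length xs])"
proof -
  have c: "count_list xs a = length (filter (\<lambda>x. x = a) xs)" by (induction xs) auto
  have "filter (\<lambda>x. x = a) xs = filter (\<lambda>x. x = a) (map (nth xs) [0..<length xs])" by (simp add: map_nth)
  also have "\<dots> = map (nth xs) (filter (\<lambda>j. xs ! j = a) [0..<length xs])" by (simp add: filter_map comp_def)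
  finally show ?thesis using c by simp
qed

lemma obtain_J:
  assumes "p \<le> count_list r a"
  obtains J where "distinct J" "length J = p" "set J \<subseteq> {..<length r}" "\<forall>j\<in>set J. r ! j = a"
proof
  let ?F = "filter (\<lambda>j. r ! j = a) [0..<length r]"
  show "distinct (take p ?F)" by simp
  show "length (take p ?F) = p" using assms count_list_filter_idx[of r a] by simp
  show "set (take p ?F) \<subseteq> {..<length r}" using set_take_subset[of p ?F] by auto
  show "\<forall>j\<in>set (take p ?F). r ! j = a" using set_take_subset[of p ?F] by auto
qed


lemma comp_pos: "c \<in> compositions n \<Longrightarrow> \<forall>x\<in>set c. 0 < x"
  by (simp add: compositions_def)

lemma comp_len: "c \<in> compositions n \<Longrightarrow> length c \<le> n"
proof -
  assume c: "c \<in> compositions n"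
  have "length c \<le> sum_list c" using comp_pos[OF c]
  proof (induction c)
    case (Cons a c) thus ?case by auto
  qed simp
  thus ?thesis using c by (simp add: compositions_def)
qed

lemma Bprod_notC:
  assumes "q \<in> compositions n" "c \<notin> compositions n"
  shows "Bprod q r c = 0"
proof -
  have e: "{Z \<in> Smat q r. cZ (length q) (length r) Z = c} = {}"
    using cZ_compositions[OF _ assms(1)] assms(2) by auto
  show ?thesis unfolding Bprod_def e by simp
qed

lemma Bprod_short:
  assumes "q \<in> compositions n" "length c < length q"
  shows "Bprod q r c = 0"
proof -
  have e: "{Z \<in> Smat q r. cZ (length q) (length r) Z = c} = {}"
    using length_cZ_ge_rows[OF _ comp_pos[OF assms(1)]] assms(2) by fastforce
  show ?thesis unfolding Bprod_def e by simp
qed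

lemma Bprod_short_cols:
  assumes "r \<in> compositions n" "length c < length r"
  shows "Bprod q r c = 0"
proof -
  have e: "{Z \<in> Smat q r. cZ (length q) (length r) Z = c} = {}"
    using length_cZ_ge_cols[OF _ comp_pos[OF assms(1)]] assms(2) by fastforce
  show ?thesis unfolding Bprod_def e by simp
qed

lemma Bprod_eqlen:
  assumes "q \<in> compositions n" "length c = length q" "c \<noteq> q"
  shows "Bprod q r c = 0"
proof -
  have e: "{Z \<in> Smat q r. cZ (length q) (length r) Z = c} = {}"
    using cZ_eq_rows(1)[OF _ comp_pos[OF assms(1)]] assms(2,3) by fastforce
  show ?thesis unfolding Bprod_def e by simp
qed

lemma dmult_cong:
  assumes "\<And>q. q \<in> compositions n \<Longrightarrow> x q mod int p = x' q mod int p"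
    and "\<And>r. r \<in> compositions n \<Longrightarrow> y r mod int p = y' r mod int p"
  shows "dmult n p x y = dmult n p x' y'"
proof
  fix c show "dmult n p x y c = dmult n p x' y' c"
    unfolding dmult_RM by (rule RM_mod_cong) (use assms in auto)
qed

fun lpow :: "nat \<Rightarrow> nat \<Rightarrow> (nat list \<Rightarrow> int) \<Rightarrow> nat \<Rightarrow> (nat list \<Rightarrow> int)" where
  "lpow n p x 0 = (\<lambda>c. x c mod int p)"
| "lpow n p x (Suc k) = dmult n p (lpow n p x k) x"

lemma lpow_comm: "dmult n p x (lpow n p x k) = dmult n p (lpow n p x k) x"
proof (induction k)
  case 0
  have "dmult n p x (lpow n p x 0) = dmult n p x x" by (rule dmult_cong) simp_all
  also have "\<dots> = dmult n p (lpow n p x 0) x" by (rule dmult_cong) simp_all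
  finally show ?case .
next
  case (Suc k)
  have "dmult n p x (lpow n p x (Suc k)) = dmult n p (dmult n p x (lpow n p x k)) x"
    by (simp add: dmult_assoc)
  also have "\<dots> = dmult n p (lpow n p x (Suc k)) x" using Suc by simp
  finally show ?case .
qed

lemma dpow_lpow: "dpow n p x k = lpow n p x k"
proof (induction k)
  case 0 thus ?case by simp
next
  case (Suc k) thus ?case by (simp add: lpow_comm)
qed

lemma dmult_right_basis:
  assumes "r \<in> compositions n"
  shows "dmult n p y (basisB p r) c = (\<Sum>q\<in>compositions n. y q * (1 mod int p) * Bprod q r c) mod int p"
proof -
  have "\<And>q. (\<Sum>r'\<in>compositions n. y q * basisB p r r' * Bprod q r' c)
       = (\<Sum>r'\<in>compositions n. if r' = r then y q * (1 mod int p) * Bprod q r' c else 0)"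
    by (rule sum.cong) (auto simp: basisB_def)
  thus ?thesis using assms finite_compositions by (simp add: dmult_def)
qed

lemma step_good:
  assumes r: "r \<in> compositions n" and p: "prime p" and cnt: "p \<le> count_list r a"
    and good: "\<forall>c\<in>compositions n. length c < l \<longrightarrow> y c mod int p = 0"
  shows "\<forall>c\<in>compositions n. length c < Suc l \<longrightarrow> dmult n p y (basisB p r) c mod int p = 0"
proof (intro ballI impI)
  fix c assume c: "c \<in> compositions n" and lc: "length c < Suc l"
  obtain J where J: "distinct J" "length J = p" "set J \<subseteq> {..<length r}" "\<forall>j\<in>set J. r ! j = a"
    using obtain_J[OF cnt] by blast
  have p1: "1 < p" using p prime_gt_1_nat by blast
  have "(\<Sum>q\<in>compositions n. y q * (1 mod int p) * Bprod q r c) mod int p = (\<Sum>q\<in>compositions n. 0) mod int p"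
  proof (rule sum_mod_cong)
    fix q assume q: "q \<in> compositions n"
    show "y q * (1 mod int p) * Bprod q r c mod int p = 0 mod int p"
    proof (cases "length q < l")
      case True
      hence "y q mod int p = 0" using good q by blast
      hence "y q * ((1 mod int p) * Bprod q r c) mod int p = 0"
        by (metis mod_mult_left_eq mult_zero_left mod_0)
      thus ?thesis by (simp add: mult.assoc)
    next
      case False
      show ?thesis
      proof (cases "length c < length q")
        case True thus ?thesis using Bprod_short[OF q True] by simp
      next
        case False
        hence lq: "length c = length q" using \<open>\<not> length q < l\<close> lc by simp
        show ?thesis
        proof (cases "c = q")
          case False thus ?thesis using Bprod_eqlen[OF q lq False] by simp
        next
          case True
          have "p dvd card {Z \<in> Smat q r. cZ (length q) (length r) Z = q}"
            by (rule Bprod_diag_dvd[OF comp_pos[OF q] comp_pos[OF r] J p1])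
          hence "int p dvd Bprod q r c" using True by (simp add: Bprod_def)
          thus ?thesis by simp
        qed
      qed
    qed
  qed
  thus "dmult n p y (basisB p r) c mod int p = 0"
    by (simp add: dmult_right_basis[OF r])
qed

lemma lpow_good:
  assumes r: "r \<in> compositions n" and p: "prime p" and cnt: "p \<le> count_list r a"
  shows "\<forall>c\<in>compositions n. length c < length r + k \<longrightarrow> lpow n p (basisB p r) k c mod int p = 0"
proof (induction k)
  case 0
  show ?case by (auto simp: basisB_def)
next
  case (Suc k)
  show ?case using step_good[OF r p cnt Suc] by simp
qed

lemma nilpotent_if:
  assumes n: "1 \<le> n" and r: "r \<in> compositions n" and p: "prime p" and cnt: "p \<le> count_list r a"
  shows "nilpotent_desc n p (basisB p r)"
proof -
  have rne: "1 \<le> length r" using r n by (cases r) (auto simp: compositions_def)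
  obtain m where nm: "n = Suc m" using n by (cases n) auto
  have g: "\<forall>c\<in>compositions n. lpow n p (basisB p r) n c mod int p = 0"
    using lpow_good[OF r p cnt, of n] comp_len rne by fastforce
  have "lpow n p (basisB p r) n = (\<lambda>_. 0)"
  proof
    fix c
    have e: "lpow n p (basisB p r) n c = RM n (lpow n p (basisB p r) m) (basisB p r) c mod int p"
      using nm by (simp add: dmult_RM)
    show "lpow n p (basisB p r) n c = 0"
    proof (cases "c \<in> compositions n")
      case True
      hence "lpow n p (basisB p r) n c mod int p = 0" using g by blast
      thus ?thesis unfolding e by simp
    next
      case False
      have "RM n (lpow n p (basisB p r) m) (basisB p r) c = 0"
        unfolding RM_def using Bprod_notC[OF _ False] by simp
      thus ?thesis using e by simp
    qed
  qed
  thus ?thesis unfolding nilpotent_desc_def using dpow_lpow by metis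
qed


lemma perm_count:
  assumes S: "finite S"
  shows "card {\<sigma>. \<sigma> permutes S \<and> (\<forall>i\<in>S. g (\<sigma> i) = g i)}
       = (\<Prod>v\<in>g ` S. fact (card {i\<in>S. g i = v}))"
proof -
  define F where "F v = {i\<in>S. g i = v}" for v
  let ?P = "{\<sigma>. \<sigma> permutes S \<and> (\<forall>i\<in>S. g (\<sigma> i) = g i)}"
  let ?T = "PiE (g ` S) (\<lambda>v. {\<tau>. \<tau> permutes F v})"
  define Psi where "Psi \<sigma> = (\<lambda>v\<in>g ` S. \<lambda>i. if i \<in> F v then \<sigma> i else i)" for \<sigma> :: "'a \<Rightarrow> 'a"
  define Phi where "Phi \<tau> = (\<lambda>i. if i \<in> S then \<tau> (g i) i else i)" for \<tau>
  have bij: "bij_betw Psi ?P ?T"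
  proof (rule bij_betwI[where g = Phi])
    show "Psi \<in> ?P \<rightarrow> ?T"
    proof
      fix \<sigma> assume "\<sigma> \<in> ?P"
      hence sp: "\<sigma> permutes S" and sg: "\<forall>i\<in>S. g (\<sigma> i) = g i" by auto
      have perm: "(\<lambda>i. if i \<in> F v then \<sigma> i else i) permutes F v" for v
      proof (rule bij_imp_permutes)
        show "bij_betw (\<lambda>i. if i \<in> F v then \<sigma> i else i) (F v) (F v)"
        proof (rule bij_betw_imageI)
          show "inj_on (\<lambda>i. if i \<in> F v then \<sigma> i else i) (F v)"
          proof (rule inj_onI)
            fix x y assume x: "x \<in> F v" and y: "y \<in> F v"
              and e: "(if x \<in> F v then \<sigma> x else x) = (if y \<in> F v then \<sigma> y else y)"
            have "\<sigma> x = \<sigma> y" using e x y by simp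
            thus "x = y" using permutes_inj[OF sp] by (simp add: inj_eq)
          qed
          show "(\<lambda>i. if i \<in> F v then \<sigma> i else i) ` F v = F v"
          proof
            show "(\<lambda>i. if i \<in> F v then \<sigma> i else i) ` F v \<subseteq> F v"
            proof
              fix y assume "y \<in> (\<lambda>i. if i \<in> F v then \<sigma> i else i) ` F v"
              then obtain x where x: "x \<in> F v" "y = \<sigma> x" by auto
              have xS: "x \<in> S" "g x = v" using x(1) by (auto simp: F_def)
              have "\<sigma> x \<in> S" using permutes_in_image[OF sp, of x] xS(1) by simp
              moreover have "g (\<sigma> x) = v" using sg xS by simp
              ultimately show "y \<in> F v" using x(2) by (simp add: F_def)
            qed
            show "F v \<subseteq> (\<lambda>i. if i \<in> F v then \<sigma> i else i) ` F v"
            proof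
              fix y assume y: "y \<in> F v"
              hence "y \<in> S" by (simp add: F_def)
              hence "y \<in> \<sigma> ` S" using permutes_image[OF sp] by simp
              then obtain x where x: "x \<in> S" "\<sigma> x = y" by blast
              have "g (\<sigma> x) = g x" using sg x(1) by blast
              hence "g x = g y" using x(2) by simp
              hence xF: "x \<in> F v" using x(1) y by (simp add: F_def)
              show "y \<in> (\<lambda>i. if i \<in> F v then \<sigma> i else i) ` F v"
              proof (rule image_eqI[where x = x])
                show "y = (if x \<in> F v then \<sigma> x else x)" using xF x(2) by simp
              qed (rule xF)
            qed
          qed
        qed
        show "\<And>x. x \<notin> F v \<Longrightarrow> (if x \<in> F v then \<sigma> x else x) = x" by simp
      qed
      have "Psi \<sigma> v \<in> {\<tau>. \<tau> permutes F v}" if "v \<in> g ` S" for v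
        using perm[of v] that by (simp add: Psi_def)
      moreover have "Psi \<sigma> \<in> extensional (g ` S)" by (simp add: Psi_def)
      ultimately show "Psi \<sigma> \<in> ?T" by (simp add: PiE_iff)
    qed
    show "Phi \<in> ?T \<rightarrow> ?P"
    proof
      fix \<tau> assume t: "\<tau> \<in> ?T"
      have tp: "\<tau> v permutes F v" if "v \<in> g ` S" for v using t that unfolding PiE_iff by blast
      have inF: "\<tau> (g i) i \<in> F (g i)" if i: "i \<in> S" for i
      proof -
        have "i \<in> F (g i)" using i by (simp add: F_def)
        moreover have "g i \<in> g ` S" using i by (rule imageI)
        ultimately show ?thesis using permutes_in_image[OF tp[of "g i"], of i] by simp
      qed
      have PhiS: "Phi \<tau> i = \<tau> (g i) i" if "i \<in> S" for i using that by (simp add: Phi_def)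
      have gg: "g (Phi \<tau> i) = g i" if i: "i \<in> S" for i
        using inF[OF i] PhiS[OF i] by (simp add: F_def)
      have PhiS2: "Phi \<tau> i \<in> S" if i: "i \<in> S" for i
        using inF[OF i] PhiS[OF i] by (simp add: F_def)
      have "bij_betw (Phi \<tau>) S S"
      proof (rule bij_betw_imageI)
        show "inj_on (Phi \<tau>) S"
        proof (rule inj_onI)
          fix i j assume i: "i \<in> S" and j: "j \<in> S" and e: "Phi \<tau> i = Phi \<tau> j"
          have gij: "g i = g j" using gg[OF i] gg[OF j] e by simp
          have "\<tau> (g i) i = \<tau> (g i) j" using e PhiS[OF i] PhiS[OF j] gij by simp
          moreover have "inj (\<tau> (g i))" using permutes_inj[OF tp[of "g i"]] i by simp
          ultimately show "i = j" by (simp add: inj_eq)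
        qed
        show "Phi \<tau> ` S = S"
        proof
          show "Phi \<tau> ` S \<subseteq> S" using PhiS2 by blast
          show "S \<subseteq> Phi \<tau> ` S"
          proof
            fix y assume y: "y \<in> S"
            have yF: "y \<in> F (g y)" using y by (simp add: F_def)
            have gy: "g y \<in> g ` S" using y by (rule imageI)
            have "y \<in> \<tau> (g y) ` F (g y)" using permutes_image[OF tp[OF gy]] yF by simp
            then obtain x where x': "y = \<tau> (g y) x" "x \<in> F (g y)" by (rule imageE)
            have x: "x \<in> F (g y)" "\<tau> (g y) x = y" using x' by simp_all
            have xS: "x \<in> S" and gx: "g x = g y" using x(1) by (auto simp: F_def)
            show "y \<in> Phi \<tau> ` S"
            proof (rule image_eqI[where x = x])
              show "y = Phi \<tau> x" using PhiS[OF xS] gx x(2) by simp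
            qed (rule xS)
          qed
        qed
      qed
      hence "Phi \<tau> permutes S" by (rule bij_imp_permutes) (simp add: Phi_def)
      thus "Phi \<tau> \<in> ?P" using gg by simp
    qed
    show "Phi (Psi \<sigma>) = \<sigma>" if "\<sigma> \<in> ?P" for \<sigma>
    proof
      fix i
      show "Phi (Psi \<sigma>) i = \<sigma> i"
        using that permutes_not_in[of \<sigma> S i] by (auto simp: Phi_def Psi_def F_def)
    qed
    show "Psi (Phi \<tau>) = \<tau>" if t: "\<tau> \<in> ?T" for \<tau>
    proof
      fix v
      show "Psi (Phi \<tau>) v = \<tau> v"
      proof (cases "v \<in> g ` S")
        case True
        have tp: "\<tau> v permutes F v" using t True unfolding PiE_iff by blast
        show ?thesis
        proof
          fix i
          show "Psi (Phi \<tau>) v i = \<tau> v i"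
            using True permutes_not_in[OF tp, of i] by (auto simp: Psi_def Phi_def F_def)
        qed
      next
        case False thus ?thesis using t by (auto simp: Psi_def PiE_iff extensional_def)
      qed
    qed
  qed
  have "card ?P = card ?T" by (rule bij_betw_same_card[OF bij])
  also have "\<dots> = (\<Prod>v\<in>g ` S. card {\<tau>. \<tau> permutes F v})" by (rule card_PiE) (use S in simp)
  also have "\<dots> = (\<Prod>v\<in>g ` S. fact (card (F v)))"
    by (rule prod.cong[OF refl], rule card_permutations) (auto simp: F_def S)
  finally show ?thesis by (simp add: F_def)
qed


definition Zs :: "nat list \<Rightarrow> (nat \<Rightarrow> nat) \<Rightarrow> nat \<Rightarrow> nat \<Rightarrow> nat" where
  "Zs r \<sigma> = (\<lambda>i j. if i < length r \<and> j = \<sigma> i then r ! i else 0)"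

definition Pset :: "nat list \<Rightarrow> (nat \<Rightarrow> nat) set" where
  "Pset r = {\<sigma>. \<sigma> permutes {..<length r} \<and> (\<forall>i\<in>{..<length r}. r ! (\<sigma> i) = r ! i)}"

definition Tset :: "nat list \<Rightarrow> (nat \<Rightarrow> nat \<Rightarrow> nat) set" where
  "Tset r = {Z \<in> Smat r r. cZ (length r) (length r) Z = r}"

lemma Zs_in:
  assumes rpos: "\<forall>x\<in>set r. 0 < x" and sP: "\<sigma> \<in> Pset r"
  shows "Zs r \<sigma> \<in> Tset r"
proof -
  let ?s = "length r"
  have sp: "\<sigma> permutes {..<?s}" and sr: "\<forall>i\<in>{..<?s}. r ! (\<sigma> i) = r ! i" using sP by (auto simp: Pset_def)
  have slt: "\<sigma> i < ?s" if "i < ?s" for i using permutes_in_image[OF sp, of i] that by simp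
  have z: "Zs r \<sigma> i j = 0" if "?s \<le> i \<or> ?s \<le> j" for i j
    using that slt by (auto simp: Zs_def not_le[symmetric])
  have rs: "(\<Sum>j<?s. Zs r \<sigma> i j) = r ! i" if i: "i < ?s" for i
  proof -
    have "(\<Sum>j<?s. Zs r \<sigma> i j) = (\<Sum>j<?s. if j = \<sigma> i then r ! i else 0)"
      using i by (simp add: Zs_def)
    also have "\<dots> = r ! i" using slt[OF i] by simp
    finally show ?thesis .
  qed
  have cs: "(\<Sum>i<?s. Zs r \<sigma> i j) = r ! j" if j: "j < ?s" for j
  proof -
    have "(\<Sum>i<?s. Zs r \<sigma> i j) = (\<Sum>i<?s. if j = \<sigma> i then r ! (\<sigma> i) else 0)"
      by (rule sum.cong[OF refl]) (use sr in \<open>auto simp: Zs_def\<close>)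
    also have "\<dots> = (\<Sum>k\<in>\<sigma> ` {..<?s}. if j = k then r ! k else 0)"
      by (rule sum.reindex[symmetric, unfolded comp_def]) (rule permutes_inj_on[OF sp])
    also have "\<dots> = (\<Sum>k<?s. if j = k then r ! k else 0)" using permutes_image[OF sp] by simp
    also have "\<dots> = r ! j" using j by simp
    finally show ?thesis .
  qed
  have Sm: "Zs r \<sigma> \<in> Smat r r" unfolding Smat_def using z rs cs by blast
  have "{(i,j). i < ?s \<and> j < ?s \<and> Zs r \<sigma> i j \<noteq> 0} = (\<lambda>i. (i, \<sigma> i)) ` {..<?s}"
    using rpos slt by (auto simp: Zs_def)
  moreover have "card ((\<lambda>i. (i, \<sigma> i)) ` {..<?s}) = ?s"
    by (subst card_image) (auto simp: inj_on_def)
  ultimately have "length (cZ ?s ?s (Zs r \<sigma>)) = ?s" by (simp add: length_cZ_card)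
  hence "cZ ?s ?s (Zs r \<sigma>) = r" using cZ_eq_rows(1)[OF Sm rpos] by simp
  thus ?thesis using Sm by (simp add: Tset_def)
qed

lemma Zs_inj:
  assumes rpos: "\<forall>x\<in>set r. 0 < x"
  shows "inj_on (Zs r) (Pset r)"
proof (rule inj_onI)
  fix \<sigma> \<tau> assume s: "\<sigma> \<in> Pset r" and t: "\<tau> \<in> Pset r" and e: "Zs r \<sigma> = Zs r \<tau>"
  have sp: "\<sigma> permutes {..<length r}" and tp: "\<tau> permutes {..<length r}" using s t by (auto simp: Pset_def)
  show "\<sigma> = \<tau>"
  proof
    fix i
    show "\<sigma> i = \<tau> i"
    proof (cases "i < length r")
      case True
      have "r ! i > 0" using rpos True by simp
      moreover have "Zs r \<sigma> i (\<sigma> i) = r ! i" using True by (simp add: Zs_def)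
      ultimately have "Zs r \<tau> i (\<sigma> i) \<noteq> 0" using e by simp
      thus ?thesis by (simp add: Zs_def split: if_splits)
    next
      case False thus ?thesis using permutes_not_in[OF sp, of i] permutes_not_in[OF tp, of i] by simp
    qed
  qed
qed


lemma Zs_surj:
  assumes rpos: "\<forall>x\<in>set r. 0 < x" and ZT: "Z \<in> Tset r"
  shows "Z \<in> Zs r ` Pset r"
proof -
  let ?s = "length r"
  have Z: "Z \<in> Smat r r" and cr: "cZ ?s ?s Z = r" using ZT by (auto simp: Tset_def)
  have one: "card {j. j < ?s \<and> Z i j \<noteq> 0} = 1" if i: "i < ?s" for i
  proof -
    have "length (cZ ?s ?s Z) = ?s" using cr by simp
    hence "length (filter (\<lambda>x. x \<noteq> 0) (map (Z i) [0..<?s])) = 1" using cZ_eq_rows(2)[OF Z rpos] i by blast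
    thus ?thesis by (simp only: length_filter_nz_card)
  qed
  define \<sigma> where "\<sigma> i = (if i < ?s then (THE j. j < ?s \<and> Z i j \<noteq> 0) else i)" for i
  have sig: "\<sigma> i < ?s \<and> Z i (\<sigma> i) \<noteq> 0 \<and> (\<forall>j. j < ?s \<and> Z i j \<noteq> 0 \<longrightarrow> j = \<sigma> i)" if i: "i < ?s" for i
  proof -
    obtain j0 where j0: "{j. j < ?s \<and> Z i j \<noteq> 0} = {j0}" using one[OF i] by (rule card_1_singletonE)
    have P: "j0 < ?s \<and> Z i j0 \<noteq> 0" using j0 by blast
    have U: "\<And>j. j < ?s \<and> Z i j \<noteq> 0 \<Longrightarrow> j = j0" using j0 by blast
    have "(THE j. j < ?s \<and> Z i j \<noteq> 0) = j0" by (rule the_equality) (fact P, erule U)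
    hence "\<sigma> i = j0" using i by (simp add: \<sigma>_def)
    thus ?thesis using P U by blast
  qed
  have zero: "Z i j = 0" if i: "i < ?s" and j: "j \<noteq> \<sigma> i" for i j
  proof (cases "j < ?s")
    case True thus ?thesis using sig[OF i] j by blast
  next
    case False thus ?thesis using Smat_D(1)[OF Z, of i j] by simp
  qed
  have val: "Z i (\<sigma> i) = r ! i" if i: "i < ?s" for i
  proof -
    have "r ! i = (\<Sum>j<?s. Z i j)" using Smat_D(2)[OF Z i] by simp
    also have "\<dots> = (\<Sum>j<?s. if j = \<sigma> i then Z i j else 0)"
      by (rule sum.cong[OF refl]) (use zero[OF i] in auto)
    also have "\<dots> = Z i (\<sigma> i)" using sig[OF i] by simp
    finally show ?thesis by simp
  qed
  have img: "\<sigma> ` {..<?s} = {..<?s}"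
  proof
    show "\<sigma> ` {..<?s} \<subseteq> {..<?s}" using sig by auto
    show "{..<?s} \<subseteq> \<sigma> ` {..<?s}"
    proof
      fix j assume "j \<in> {..<?s}"
      hence j: "j < ?s" by simp
      have "(\<Sum>i<?s. Z i j) = r ! j" by (rule Smat_D(3)[OF Z j])
      moreover have "r ! j > 0" using rpos j by simp
      ultimately obtain i where i: "i < ?s" "Z i j \<noteq> 0"
        by (metis lessThan_iff less_not_refl sum.neutral)
      hence "j = \<sigma> i" using sig[OF i(1)] j by blast
      thus "j \<in> \<sigma> ` {..<?s}" using i(1) by blast
    qed
  qed
  have inj: "inj_on \<sigma> {..<?s}" by (rule eq_card_imp_inj_on) (use img in simp_all)
  have bj: "bij_betw \<sigma> {..<?s} {..<?s}" unfolding bij_betw_def using inj img by blast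
  have sp: "\<sigma> permutes {..<?s}"
    by (rule bij_imp_permutes[OF bj]) (simp add: \<sigma>_def)
  have rv: "r ! (\<sigma> i) = r ! i" if i: "i < ?s" for i
  proof -
    have si: "\<sigma> i < ?s" using sig[OF i] by blast
    have "r ! (\<sigma> i) = (\<Sum>i'<?s. Z i' (\<sigma> i))" using Smat_D(3)[OF Z si] by simp
    also have "\<dots> = (\<Sum>i'<?s. if i' = i then Z i' (\<sigma> i) else 0)"
    proof (rule sum.cong[OF refl])
      fix i' assume "i' \<in> {..<?s}"
      hence i': "i' < ?s" by simp
      show "Z i' (\<sigma> i) = (if i' = i then Z i' (\<sigma> i) else 0)"
      proof (cases "i' = i")
        case False
        have "Z i' (\<sigma> i) = 0"
        proof (rule ccontr)
          assume "Z i' (\<sigma> i) \<noteq> 0"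
          hence "\<sigma> i = \<sigma> i'" using sig[OF i'] si by blast
          hence "i = i'" using inj i i' by (simp add: inj_on_def)
          thus False using False by simp
        qed
        thus ?thesis using False by simp
      qed simp
    qed
    also have "\<dots> = Z i (\<sigma> i)" using i by simp
    also have "\<dots> = r ! i" by (rule val[OF i])
    finally show ?thesis .
  qed
  have sP: "\<sigma> \<in> Pset r" using sp rv by (simp add: Pset_def)
  have "Z = Zs r \<sigma>"
  proof (intro ext)
    fix i j
    show "Z i j = Zs r \<sigma> i j"
    proof (cases "i < ?s")
      case True
      show ?thesis
      proof (cases "j = \<sigma> i")
        case True thus ?thesis using val[OF \<open>i < ?s\<close>] \<open>i < ?s\<close> by (simp add: Zs_def)
      next
        case False thus ?thesis using zero[OF \<open>i < ?s\<close> False] by (simp add: Zs_def)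
      qed
    next
      case False thus ?thesis using Smat_D(1)[OF Z, of i j] by (simp add: Zs_def)
    qed
  qed
  thus ?thesis using sP by blast
qed

lemma card_Tset:
  assumes rpos: "\<forall>x\<in>set r. 0 < x"
  shows "card (Tset r) = (\<Prod>v\<in>set r. fact (count_list r v))"
proof -
  have im: "Zs r ` Pset r = Tset r"
  proof
    show "Zs r ` Pset r \<subseteq> Tset r"
    proof
      fix Z assume "Z \<in> Zs r ` Pset r"
      then obtain \<sigma> where "\<sigma> \<in> Pset r" "Z = Zs r \<sigma>" by (rule imageE) simp
      thus "Z \<in> Tset r" using Zs_in[OF rpos] by simp
    qed
    show "Tset r \<subseteq> Zs r ` Pset r"
    proof
      fix Z assume "Z \<in> Tset r"
      thus "Z \<in> Zs r ` Pset r" by (rule Zs_surj[OF rpos])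
    qed
  qed
  have "bij_betw (Zs r) (Pset r) (Tset r)"
    by (rule bij_betw_imageI[OF Zs_inj[OF rpos] im])
  hence "card (Tset r) = card (Pset r)" by (simp add: bij_betw_same_card)
  also have "\<dots> = (\<Prod>v\<in>(!) r ` {..<length r}. fact (card {i\<in>{..<length r}. r ! i = v}))"
    unfolding Pset_def by (rule perm_count) simp
  also have "(!) r ` {..<length r} = set r"
  proof -
    have "(!) r ` {..<length r} = set (map ((!) r) [0..<length r])" by (simp add: atLeast0LessThan)
    also have "map ((!) r) [0..<length r] = r" by (rule map_nth)
    finally show ?thesis .
  qed
  also have "(\<Prod>v\<in>set r. fact (card {i\<in>{..<length r}. r ! i = v})) = (\<Prod>v\<in>set r. fact (count_list r v))"
  proof (rule prod.cong[OF refl])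
    fix v
    have "count_list r v = length (filter (\<lambda>j. r ! j = v) [0..<length r])" by (rule count_list_filter_idx)
    also have "\<dots> = card (set (filter (\<lambda>j. r ! j = v) [0..<length r]))" by (rule distinct_card[symmetric]) simp
    also have "set (filter (\<lambda>j. r ! j = v) [0..<length r]) = {i\<in>{..<length r}. r ! i = v}" by auto
    finally show "fact (card {i\<in>{..<length r}. r ! i = v}) = fact (count_list r v)" by simp
  qed
  finally show ?thesis .
qed

lemma Tset_not_dvd:
  assumes rpos: "\<forall>x\<in>set r. 0 < x" and p: "prime p" and cnt: "\<forall>a. count_list r a < p"
  shows "\<not> p dvd card (Tset r)"
proof
  assume "p dvd card (Tset r)"
  hence "p dvd (\<Prod>v\<in>set r. fact (count_list r v))" using card_Tset[OF rpos] by simp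
  hence "\<exists>v\<in>set r. p dvd fact (count_list r v)" by (simp only: prime_dvd_prod_iff[OF finite_set p])
  then obtain v where "p dvd fact (count_list r v)" by blast
  hence "p \<le> count_list r v" using prime_dvd_fact_iff[OF p] by simp
  thus False using cnt by (simp add: not_le[symmetric])
qed


lemma dmult_left_basis:
  assumes r: "r \<in> compositions n" and p1: "1 < p"
  shows "dmult n p (basisB p r) y c = (\<Sum>q'\<in>compositions n. y q' * Bprod r q' c) mod int p"
proof -
  have m1: "1 mod int p = 1" using p1 by simp
  have "\<And>q. (\<Sum>q'\<in>compositions n. basisB p r q * y q' * Bprod q q' c)
       = (if q = r then (\<Sum>q'\<in>compositions n. y q' * Bprod r q' c) else 0)"
    by (simp add: basisB_def m1)
  hence "(\<Sum>q\<in>compositions n. \<Sum>q'\<in>compositions n. basisB p r q * y q' * Bprod q q' c)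
      = (\<Sum>q\<in>compositions n. if q = r then (\<Sum>q'\<in>compositions n. y q' * Bprod r q' c) else 0)"
    by simp
  also have "\<dots> = (\<Sum>q'\<in>compositions n. y q' * Bprod r q' c)" using r finite_compositions by simp
  finally show ?thesis by (simp add: dmult_def)
qed

lemma inv_dpow:
  assumes r: "r \<in> compositions n" and p1: "1 < p"
  shows "\<forall>c. (length c < length r \<or> (length c = length r \<and> c \<noteq> r)) \<longrightarrow> dpow n p (basisB p r) k c = 0"
proof (cases k)
  case 0 thus ?thesis by (auto simp: basisB_def)
next
  case (Suc m)
  show ?thesis
  proof (intro allI impI)
    fix c assume c: "length c < length r \<or> (length c = length r \<and> c \<noteq> r)"
    have "\<And>q'. q' \<in> compositions n \<Longrightarrow> Bprod r q' c = 0"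
      using c Bprod_short[OF r] Bprod_eqlen[OF r] by blast
    hence "(\<Sum>q'\<in>compositions n. dpow n p (basisB p r) m q' * Bprod r q' c) = 0" by simp
    thus "dpow n p (basisB p r) k c = 0" using Suc dmult_left_basis[OF r p1] by simp
  qed
qed

lemma dpow_rec:
  assumes r: "r \<in> compositions n" and p1: "1 < p"
  shows "dpow n p (basisB p r) (Suc k) r = (dpow n p (basisB p r) k r * Bprod r r r) mod int p"
proof -
  let ?y = "dpow n p (basisB p r) k"
  have "(\<Sum>q'\<in>compositions n. ?y q' * Bprod r q' r) = (\<Sum>q'\<in>compositions n. if q' = r then ?y r * Bprod r r r else 0)"
  proof (rule sum.cong[OF refl])
    fix q' assume q': "q' \<in> compositions n"
    show "?y q' * Bprod r q' r = (if q' = r then ?y r * Bprod r r r else 0)"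
    proof (cases "q' = r")
      case False
      show ?thesis
      proof (cases "length r < length q'")
        case True thus ?thesis using Bprod_short_cols[OF q' True] False by simp
      next
        case False
        hence "length q' < length r \<or> (length q' = length r \<and> q' \<noteq> r)" using \<open>q' \<noteq> r\<close> by auto
        hence "?y q' = 0" using inv_dpow[OF r p1, of k] by blast
        thus ?thesis using \<open>q' \<noteq> r\<close> by simp
      qed
    qed simp
  qed
  also have "\<dots> = ?y r * Bprod r r r" using r finite_compositions by simp
  finally show ?thesis using dmult_left_basis[OF r p1] by simp
qed

lemma dpow_r:
  assumes r: "r \<in> compositions n" and p1: "1 < p"
  shows "dpow n p (basisB p r) k r = (Bprod r r r ^ k) mod int p"
proof (induction k)
  case 0 thus ?case using p1 by (simp add: basisB_def)
next
  case (Suc k)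
  have "dpow n p (basisB p r) (Suc k) r = ((Bprod r r r ^ k) mod int p * Bprod r r r) mod int p"
    using dpow_rec[OF r p1] Suc by simp
  also have "\<dots> = (Bprod r r r ^ Suc k) mod int p" by (simp add: mod_mult_left_eq mod_mult_right_eq mult.commute)
  finally show ?case .
qed

lemma not_nilpotent:
  assumes r: "r \<in> compositions n" and p: "prime p" and cnt: "\<forall>a. count_list r a < p"
  shows "\<not> nilpotent_desc n p (basisB p r)"
proof
  assume "nilpotent_desc n p (basisB p r)"
  then obtain k where k: "dpow n p (basisB p r) k = (\<lambda>_. 0)" by (auto simp: nilpotent_desc_def)
  have p1: "1 < p" using p prime_gt_1_nat by blast
  have B: "Bprod r r r = int (card (Tset r))" by (simp add: Bprod_def Tset_def)
  have "(Bprod r r r ^ k) mod int p = 0" using dpow_r[OF r p1, of k] k by simp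
  hence "int p dvd int (card (Tset r) ^ k)" using B by (simp add: mod_eq_0_iff_dvd)
  hence "p dvd card (Tset r) ^ k" by (simp only: of_nat_dvd_iff)
  hence "p dvd card (Tset r)" by (rule prime_dvd_power[OF p])
  thus False using Tset_not_dvd[OF comp_pos[OF r] p cnt] by simp
qed

theorem lemma2p4:
  fixes n p :: nat and r :: "nat list"
  assumes "1 \<le> n" and "prime p" and "r \<in> compositions n"
  shows "nilpotent_desc n p (basisB p r) \<longleftrightarrow> (\<exists>a::nat. 0 < a \<and> p \<le> count_list r a)"
proof
  assume nil: "nilpotent_desc n p (basisB p r)"
  show "\<exists>a::nat. 0 < a \<and> p \<le> count_list r a"
  proof (rule ccontr)
    assume h: "\<not> (\<exists>a::nat. 0 < a \<and> p \<le> count_list r a)"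
    have "\<forall>a. count_list r a < p"
    proof
      fix a
      show "count_list r a < p"
      proof (cases "a = 0")
        case True
        have "0 \<notin> set r" using comp_pos[OF assms(3)] by auto
        hence "count_list r a = 0" using True by simp
        thus ?thesis using prime_gt_0_nat[OF assms(2)] by simp
      next
        case False
        hence "\<not> p \<le> count_list r a" using h by blast
        thus ?thesis by simp
      qed
    qed
    thus False using not_nilpotent[OF assms(3) assms(2)] nil by blast
  qed
next
  assume "\<exists>a::nat. 0 < a \<and> p \<le> count_list r a"
  then obtain a where "p \<le> count_list r a" by blast
  thus "nilpotent_desc n p (basisB p r)" by (rule nilpotent_if[OF assms(1) assms(3) assms(2)])
qed


end
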